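(* Let $P=\operatorname{conv}(W(\Lambda))$ be a full-dimensional non-degenerate $W$-symmetric polytope and $K\subseteq S$. (1) $P$ is simple if and only if the polytope $P/W_K=P\cap C_K$ is simple. (2) If $P$ is flag, then so is $P/W_K$.
   Context: $V$ is a real Euclidean space of dimension $n$, $R$ a reduced root system spanning $V$ with simple system $S=\{\alpha_1,\dots,\alpha_n\}$, $W$ its Weyl group generated by the simple reflections, $W_K$ the parabolic subgroup generated by reflections in the roots of $K$. $C_K=\{x:\langle x,\alpha_k\rangle\ge0\ \forall \alpha_k\in K\}$; $\Lambda\subset C_S$ finite. Non-degenerate: no vertex of $P$ lies on the boundary of $C_S$. A polytope is simple if each vertex lies in exactly $n$ facets; flag if any collection of facets in which every two facets intersect has non-empty total intersection. *)

theory Defs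
  imports "HOL-Analysis.Analysis"
begin

definition refl :: "'a::euclidean_space \<Rightarrow> 'a \<Rightarrow> 'a" where
  "refl a x = x - ((2 * (x \<bullet> a)) / (a \<bullet> a)) *\<^sub>R a"

definition root_system :: "'a::euclidean_space set \<Rightarrow> bool" where
  "root_system R \<longleftrightarrow> finite R \<and> 0 \<notin> R \<and> span R = UNIV
     \<and> (\<forall>a\<in>R. \<forall>b\<in>R. refl a b \<in> R)
     \<and> (\<forall>a\<in>R. \<forall>b\<in>R. \<exists>k::int. 2 * (b \<bullet> a) / (a \<bullet> a) = of_int k)
     \<and> (\<forall>a\<in>R. \<forall>c::real. c *\<^sub>R a \<in> R \<longrightarrow> c = 1 \<or> c = -1)"

definition simple_system :: "'a::euclidean_space set \<Rightarrow> 'a set \<Rightarrow> bool" where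
  "simple_system R S \<longleftrightarrow> S \<subseteq> R \<and> independent S
     \<and> (\<forall>b\<in>R. \<exists>c. b = (\<Sum>a\<in>S. c a *\<^sub>R a)
                 \<and> ((\<forall>a\<in>S. c a \<ge> 0) \<or> (\<forall>a\<in>S. c a \<le> 0)))"

text \<open>The group of maps generated by a set of (involutive) maps.\<close>
inductive_set gen_group :: "('a \<Rightarrow> 'a) set \<Rightarrow> ('a \<Rightarrow> 'a) set" for G where
  gen_id: "id \<in> gen_group G"
| gen_step: "f \<in> gen_group G \<Longrightarrow> g \<in> G \<Longrightarrow> g \<circ> f \<in> gen_group G"

text \<open>Parabolic subgroup W_K generated by the reflections in roots of K
  (W = W_S is the Weyl group).\<close>
definition parabolic :: "'a::euclidean_space set \<Rightarrow> ('a \<Rightarrow> 'a) set" where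
  "parabolic K = gen_group (refl ` K)"

definition chamber :: "'a::euclidean_space set \<Rightarrow> 'a set" where
  "chamber K = {x. \<forall>a\<in>K. x \<bullet> a \<ge> 0}"

definition W_polytope :: "'a::euclidean_space set \<Rightarrow> 'a set \<Rightarrow> 'a set" where
  "W_polytope S \<Lambda> = convex hull {w x | w x. w \<in> parabolic S \<and> x \<in> \<Lambda>}"

definition simple_polytope :: "'a::euclidean_space set \<Rightarrow> bool" where
  "simple_polytope P \<longleftrightarrow> polytope P \<and>
     (\<forall>v. v extreme_point_of P \<longrightarrow> card {F. F facet_of P \<and> v \<in> F} = DIM('a))"

definition flag_polytope :: "'a::euclidean_space set \<Rightarrow> bool" where
  "flag_polytope P \<longleftrightarrow> polytope P \<and>
     (\<forall>\<F>. \<F> \<subseteq> {F. F facet_of P} \<and> (\<forall>F\<in>\<F>. \<forall>G\<in>\<F>. F \<inter> G \<noteq> {})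
            \<longrightarrow> \<Inter>\<F> \<noteq> {})"

end

theory Submission imports Defs begin

section \<open>Reflections\<close>

lemma refl_linear: "linear (refl a)"
proof (rule linearI)
  fix x y show "refl a (x + y) = refl a x + refl a y"
    unfolding refl_def inner_add_left add_divide_distrib distrib_left scaleR_add_left by simp
next
  fix c x show "refl a (c *\<^sub>R x) = c *\<^sub>R refl a x"
    unfolding refl_def by (simp add: scaleR_diff_right)
qed

lemma refl_fix: "x \<bullet> a = 0 \<Longrightarrow> refl a x = x"
  by (simp add: refl_def)

lemma refl_inner_a: "refl a x \<bullet> a = - (x \<bullet> a)"
proof (cases "a = 0")
  case True then show ?thesis by (simp add: refl_def)
next
  case False
  then have "a \<bullet> a \<noteq> 0" by simp
  then show ?thesis unfolding refl_def inner_diff_left inner_scaleR_left by simp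
qed
lemma refl_refl [simp]: "refl a (refl a x) = x"
proof -
  have "refl a (refl a x) = refl a x - ((2 * (- (x \<bullet> a))) / (a \<bullet> a)) *\<^sub>R a"
    unfolding refl_def[of a "refl a x"] refl_inner_a ..
  also have "\<dots> = x" unfolding refl_def by simp
  finally show ?thesis .
qed

lemma refl_sym: "refl a x \<bullet> y = x \<bullet> refl a y"
  unfolding refl_def inner_diff_left inner_diff_right inner_scaleR_left inner_scaleR_right
  by (simp add: inner_commute)

lemma refl_inner [simp]: "refl a x \<bullet> refl a y = x \<bullet> y"
  by (simp add: refl_sym)

lemma refl_eq: "refl a x = x - ((2 * (x \<bullet> a)) / (a \<bullet> a)) *\<^sub>R a"
  by (simp add: refl_def)

lemma refl_dot: "refl a x \<bullet> y = x \<bullet> y - ((2 * (x \<bullet> a)) / (a \<bullet> a)) * (a \<bullet> y)"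
  unfolding refl_def inner_diff_left inner_scaleR_left ..

section \<open>Generated groups\<close>

lemma gen_group_gen: "g \<in> G \<Longrightarrow> g \<in> gen_group G"
  using gen_group.gen_step[OF gen_group.gen_id, of g G] by simp

lemma gen_group_comp: assumes "f \<in> gen_group G" "f' \<in> gen_group G" shows "f \<circ> f' \<in> gen_group G"
  using assms(1)
proof (induction f rule: gen_group.induct)
  case gen_id then show ?case using assms(2) by (simp only: id_comp)
next
  case (gen_step f g)
  have "g \<circ> (f \<circ> f') \<in> gen_group G" by (rule gen_group.gen_step[OF gen_step.IH gen_step.hyps(2)])
  then show ?case by (simp only: comp_assoc)
qed

lemma parab_refl: "a \<in> K \<Longrightarrow> refl a \<in> parabolic K"
  unfolding parabolic_def by (rule gen_group_gen) auto

lemma parab_comp: "w \<in> parabolic K \<Longrightarrow> w' \<in> parabolic K \<Longrightarrow> w \<circ> w' \<in> parabolic K"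
  unfolding parabolic_def by (rule gen_group_comp)

lemma parab_induct[consumes 1, case_names id step]:
  assumes "w \<in> parabolic K" "P id" "\<And>f a. f \<in> parabolic K \<Longrightarrow> P f \<Longrightarrow> a \<in> K \<Longrightarrow> P (refl a \<circ> f)"
  shows "P w"
  using assms(1) unfolding parabolic_def
proof (induction w rule: gen_group.induct)
  case gen_id then show ?case by (rule assms(2))
next
  case (gen_step f g)
  then obtain a where a: "a \<in> K" "g = refl a" by blast
  have "f \<in> parabolic K" using gen_step(1) by (simp add: parabolic_def)
  from assms(3)[OF this gen_step(3) a(1)] a(2) show ?case by blast
qed

lemma parab_linear: "w \<in> parabolic K \<Longrightarrow> linear w"
proof (induction rule: parab_induct)
  case id show ?case by (rule linear_id)
next
  case (step f a) then have "linear f" by blast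
  then show ?case using linear_compose refl_linear by blast
qed

lemma parab_inner [simp]: "w \<in> parabolic K \<Longrightarrow> w x \<bullet> w y = x \<bullet> y"
proof (induction arbitrary: x y rule: parab_induct)
  case id show ?case by simp
next
  case (step f a) then have "f x \<bullet> f y = x \<bullet> y" by blast
  then show ?case by (simp only: comp_apply refl_inner)
qed

lemma parab_inj: assumes "w \<in> parabolic K" shows "inj w"
proof (rule injI)
  fix x y assume "w x = w y"
  then have "w (x - y) = 0" using parab_linear[OF assms] by (simp add: linear_diff)
  then have "(x - y) \<bullet> (x - y) = 0" using parab_inner[OF assms, of "x - y" "x - y"] by simp
  then show "x = y" by simp
qed

lemma parab_inv:
  assumes "w \<in> parabolic K" shows "\<exists>w'\<in>parabolic K. w' \<circ> w = id \<and> w \<circ> w' = id"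
  using assms
proof (induction rule: parab_induct)
  case id
  have "id \<in> parabolic K" unfolding parabolic_def by (rule gen_group.gen_id)
  then show ?case by (intro bexI[of _ id]) simp_all
next
  case (step f a)
  then obtain f' where f': "f' \<in> parabolic K" "f' \<circ> f = id" "f \<circ> f' = id" by blast
  have "f' \<circ> refl a \<in> parabolic K" using f'(1) step parab_comp parab_refl by blast
  moreover have "(f' \<circ> refl a) \<circ> (refl a \<circ> f) = id"
  proof
    fix x show "((f' \<circ> refl a) \<circ> (refl a \<circ> f)) x = id x"
      using fun_cong[OF f'(2), of x] by simp
  qed
  moreover have "(refl a \<circ> f) \<circ> (f' \<circ> refl a) = id"
  proof
    fix x show "((refl a \<circ> f) \<circ> (f' \<circ> refl a)) x = id x"
      using fun_cong[OF f'(3), of "refl a x"] by simp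
  qed
  ultimately show ?case by blast
qed

lemma parab_root:
  assumes "root_system R" "K \<subseteq> R" "w \<in> parabolic K" "b \<in> R"
  shows "w b \<in> R"
  using assms(3,4)
proof (induction arbitrary: b rule: parab_induct)
  case id then show ?case by simp
next
  case (step f a)
  have "f b \<in> R" using step by blast
  moreover have "a \<in> R" using step assms(2) by blast
  ultimately show ?case using assms(1) unfolding root_system_def by simp
qed

lemma parab_mono: "w \<in> parabolic K \<Longrightarrow> K \<subseteq> S \<Longrightarrow> w \<in> parabolic S"
proof (induction rule: parab_induct)
  case id then show ?case by (metis gen_group.gen_id parabolic_def)
next
  case (step f a) then show ?case using parab_comp parab_refl by blast
qed


lemma dual_exists:
  fixes B :: "'a::euclidean_space set"
  assumes "independent B" shows "\<exists>d. \<forall>x\<in>B. d \<bullet> x = f x"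
proof -
  obtain g :: "'a \<Rightarrow> real" where g: "linear g" "\<forall>x\<in>B. g x = f x"
    using linear_independent_extend[OF assms] by blast
  define d where "d = (\<Sum>i\<in>Basis. g i *\<^sub>R i)"
  have "d \<bullet> x = g x" for x
  proof -
    have "g x = g (\<Sum>i\<in>Basis. (x \<bullet> i) *\<^sub>R i)" by (simp add: euclidean_representation)
    also have "\<dots> = (\<Sum>i\<in>Basis. (x \<bullet> i) * g i)"
      by (simp add: linear_sum[OF g(1)] linear_scale[OF g(1)])
    also have "\<dots> = d \<bullet> x" by (simp add: d_def inner_sum_right inner_commute mult.commute)
    finally show ?thesis by simp
  qed
  then show ?thesis using g(2) by (intro exI[of _ d]) simp
qed

lemma finite_max_obtain:
  assumes "finite A" "A \<noteq> {}" shows "\<exists>x\<in>A. \<forall>y\<in>A. (f y :: real) \<le> f x"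
proof -
  have "Max (f ` A) \<in> f ` A" using assms by (intro Max_in) auto
  then obtain x where x: "x \<in> A" "f x = Max (f ` A)" by auto
  have "\<forall>y\<in>A. f y \<le> Max (f ` A)" using assms by auto
  then show ?thesis using x by metis
qed

section \<open>Generic polytope lemmas\<close>

lemma pull_in:
  fixes v p :: "'a::euclidean_space"
  assumes "convex X" "v \<in> X" "p \<in> X" "e > 0"
  obtains t where "0 < t" "t < 1" "v + t *\<^sub>R (p - v) \<in> X" "v + t *\<^sub>R (p - v) \<in> ball v e"
proof -
  define n where "n = norm (p - v)"
  have n0: "n \<ge> 0" by (simp add: n_def)
  define c where "c = e / (2 * (n + 1))"
  have np: "2 * (n + 1) > 0" using n0 by simp
  then have c0: "c > 0" using assms(4) unfolding c_def by (rule divide_pos_pos[rotated])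
  define t where "t = min (1/2) c"
  have t0: "0 < t" using c0 by (simp add: t_def)
  have t1: "t < 1" by (simp add: t_def)
  have "v + t *\<^sub>R (p - v) = (1 - t) *\<^sub>R v + t *\<^sub>R p" by (simp add: algebra_simps)
  moreover have "(1 - t) *\<^sub>R v + t *\<^sub>R p \<in> X"
    using assms(1,2,3) t0 t1 unfolding convex_def by simp
  ultimately have inX: "v + t *\<^sub>R (p - v) \<in> X" by simp
  have "t * n \<le> c * n" using n0 by (intro mult_right_mono) (auto simp: t_def)
  also have "\<dots> \<le> c * (n + 1)" using c0 by (intro mult_left_mono) auto
  also have "\<dots> = e / 2"
  proof -
    have "n + 1 \<noteq> 0" using n0 by simp
    then show ?thesis by (simp add: c_def field_simps)
  qed
  also have "\<dots> < e" using assms(4) by simp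
  finally have "t * n < e" .
  then have "dist v (v + t *\<^sub>R (p - v)) < e" using t0 by (simp add: dist_norm n_def)
  then show ?thesis using that t0 t1 inX by simp
qed

lemma face_local_subset:
  fixes F G :: "'a::euclidean_space set"
  assumes "F face_of S" "G face_of S" "v \<in> F" "v \<in> G" "e > 0" "F \<inter> ball v e \<subseteq> G"
  shows "F \<subseteq> G"
proof
  fix p assume pF: "p \<in> F"
  show "p \<in> G"
  proof (cases "p = v")
    case True then show ?thesis using assms(4) by simp
  next
    case False
    have cF: "convex F" using assms(1) by (rule face_of_imp_convex)
    obtain t where t: "0 < t" "t < 1" "v + t *\<^sub>R (p - v) \<in> F" "v + t *\<^sub>R (p - v) \<in> ball v e"
      using pull_in[OF cF assms(3) pF assms(5)] by blast
    have qG: "v + t *\<^sub>R (p - v) \<in> G" using t(3,4) assms(6) by blast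
    have "v + t *\<^sub>R (p - v) = (1 - t) *\<^sub>R v + t *\<^sub>R p" by (simp add: algebra_simps)
    then have "v + t *\<^sub>R (p - v) \<in> open_segment v p"
      using t(1,2) False by (auto simp: in_segment)
    moreover have "v \<in> S" "p \<in> S" using assms(1,3) pF face_of_imp_subset by blast+
    ultimately show ?thesis using face_ofD[OF assms(2) _ _ _ qG] by blast
  qed
qed

lemma local_supporting:
  fixes X :: "'a::euclidean_space set"
  assumes "convex X" "v \<in> X" "e > 0" "\<forall>x\<in>X \<inter> ball v e. a \<bullet> x \<le> b" "a \<bullet> v = b"
  shows "\<forall>x\<in>X. a \<bullet> x \<le> b"
proof
  fix p assume pX: "p \<in> X"
  obtain t where t: "0 < t" "t < 1" "v + t *\<^sub>R (p - v) \<in> X" "v + t *\<^sub>R (p - v) \<in> ball v e"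
    using pull_in[OF assms(1,2) pX assms(3)] by blast
  then have "a \<bullet> (v + t *\<^sub>R (p - v)) \<le> b" using assms(4) by blast
  then have "t * (a \<bullet> p - b) \<le> 0" using assms(5) by (simp add: inner_add_right inner_diff_right algebra_simps)
  then have "a \<bullet> p - b \<le> 0" using t(1) by (simp add: mult_le_0_iff)
  then show "a \<bullet> p \<le> b" by simp
qed

lemma local_facet_transfer:
  fixes P P' :: "'a::euclidean_space set"
  assumes "polyhedron P" "convex P'" "v \<in> P" "e > 0" "P \<inter> ball v e = P' \<inter> ball v e"
    "F facet_of P" "v \<in> F"
  shows "\<exists>F'. F' facet_of P' \<and> v \<in> F' \<and> F' \<inter> ball v e = F \<inter> ball v e"
proof -
  obtain a b where ab: "a \<noteq> 0" "P \<subseteq> {x. a \<bullet> x \<le> b}" "F = P \<inter> {x. a \<bullet> x = b}"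
    using facet_of_polyhedron[OF assms(1,6)] by blast
  have av: "a \<bullet> v = b" using assms(7) ab(3) by blast
  have ve: "v \<in> ball v e" using assms(4) by simp
  have "v \<in> P \<inter> ball v e" using assms(3) ve by blast
  then have "v \<in> P' \<inter> ball v e" using assms(5) by simp
  then have vP': "v \<in> P'" by blast
  have loc: "\<forall>x\<in>P' \<inter> ball v e. a \<bullet> x \<le> b"
  proof
    fix x assume "x \<in> P' \<inter> ball v e"
    then have "x \<in> P" using assms(5) by blast
    then show "a \<bullet> x \<le> b" using ab(2) by blast
  qed
  have sup: "\<forall>x\<in>P'. a \<bullet> x \<le> b" by (rule local_supporting[OF assms(2) vP' assms(4) loc av])
  define F' where "F' = P' \<inter> {x. a \<bullet> x = b}"
  have fF': "F' face_of P'" unfolding F'_def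
    by (rule face_of_Int_supporting_hyperplane_le[OF assms(2)]) (use sup in blast)
  have vF': "v \<in> F'" using vP' av by (simp add: F'_def)
  have "F' \<inter> ball v e = (P' \<inter> ball v e) \<inter> {x. a \<bullet> x = b}" unfolding F'_def by blast
  also have "\<dots> = (P \<inter> ball v e) \<inter> {x. a \<bullet> x = b}" using assms(5) by simp
  also have "\<dots> = F \<inter> ball v e" unfolding ab(3) by blast
  finally have eqB: "F' \<inter> ball v e = F \<inter> ball v e" .
  have cF: "convex F" using assms(6) facet_of_imp_face_of face_of_imp_convex by blast
  have cF': "convex F'" using fF' face_of_imp_convex by blast
  have cP: "convex P" using assms(1) polyhedron_imp_convex by blast
  have ne1: "F' \<inter> ball v e \<noteq> {}" using vF' ve by blast
  have ne2: "F \<inter> ball v e \<noteq> {}" using assms(7) ve by blast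
  have ne3: "P' \<inter> ball v e \<noteq> {}" using vP' ve by blast
  have ne4: "P \<inter> ball v e \<noteq> {}" using assms(3) ve by blast
  have "aff_dim F' = aff_dim (F' \<inter> ball v e)"
    using aff_dim_convex_Int_open[OF cF' open_ball ne1] by simp
  also have "\<dots> = aff_dim (F \<inter> ball v e)" using eqB by simp
  also have "\<dots> = aff_dim F"
    using aff_dim_convex_Int_open[OF cF open_ball ne2] by simp
  finally have d1: "aff_dim F' = aff_dim F" .
  have "aff_dim P' = aff_dim (P' \<inter> ball v e)"
    using aff_dim_convex_Int_open[OF assms(2) open_ball ne3] by simp
  also have "\<dots> = aff_dim (P \<inter> ball v e)" using assms(5) by simp
  also have "\<dots> = aff_dim P"
    using aff_dim_convex_Int_open[OF cP open_ball ne4] by simp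
  finally have d2: "aff_dim P' = aff_dim P" .
  have dF: "aff_dim F = aff_dim P - 1" using assms(6) by (simp add: facet_of_def)
  have "F' \<noteq> {}" using vF' by blast
  then have "F' facet_of P'" using fF' d1 d2 dF by (simp add: facet_of_def)
  then show ?thesis using vF' eqB by blast
qed

lemma local_facets_card:
  fixes P P' :: "'a::euclidean_space set"
  assumes "polyhedron P" "polyhedron P'" "v \<in> P" "e > 0" "P \<inter> ball v e = P' \<inter> ball v e"
  shows "card {F. F facet_of P \<and> v \<in> F} = card {F. F facet_of P' \<and> v \<in> F}"
proof -
  define A where "A = {F. F facet_of P \<and> v \<in> F}"
  define A' where "A' = {F. F facet_of P' \<and> v \<in> F}"
  define \<Phi> where "\<Phi> F = F \<inter> ball v e" for F :: "'a set"
  have ve: "v \<in> ball v e" using assms(4) by simp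
  have "v \<in> P \<inter> ball v e" using assms(3) ve by blast
  then have "v \<in> P' \<inter> ball v e" using assms(5) by simp
  then have vP': "v \<in> P'" by blast
  have cP: "convex P" "convex P'" using assms(1,2) polyhedron_imp_convex by blast+
  have inj: "inj_on \<Phi> {F. F facet_of X \<and> v \<in> F}" for X
  proof (rule inj_onI)
    fix F G assume F0: "F \<in> {F. F facet_of X \<and> v \<in> F}" and G0: "G \<in> {F. F facet_of X \<and> v \<in> F}"
      and eq0: "\<Phi> F = \<Phi> G"
    have F: "F face_of X" "v \<in> F" using F0 facet_of_imp_face_of by auto
    have G: "G face_of X" "v \<in> G" using G0 facet_of_imp_face_of by auto
    have eq: "F \<inter> ball v e = G \<inter> ball v e" using eq0 by (simp add: \<Phi>_def)
    have "F \<subseteq> G" using face_local_subset[OF F(1) G(1) F(2) G(2) assms(4)] eq by blast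
    moreover have "G \<subseteq> F" using face_local_subset[OF G(1) F(1) G(2) F(2) assms(4)] eq by blast
    ultimately show "F = G" by blast
  qed
  have "\<Phi> ` A \<subseteq> \<Phi> ` A'"
  proof
    fix Y assume "Y \<in> \<Phi> ` A"
    then obtain F where F0: "F \<in> A" "Y = \<Phi> F" by blast
    then have F: "F facet_of P" "v \<in> F" by (simp_all add: A_def)
    obtain F' where F': "F' facet_of P'" "v \<in> F'" "F' \<inter> ball v e = F \<inter> ball v e"
      using local_facet_transfer[OF assms(1) cP(2) assms(3,4,5) F(1,2)] by blast
    have "F' \<in> A'" using F'(1,2) by (simp add: A'_def)
    moreover have "Y = \<Phi> F'" using F0(2) F'(3) by (simp add: \<Phi>_def)
    ultimately show "Y \<in> \<Phi> ` A'" by blast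
  qed
  moreover have "\<Phi> ` A' \<subseteq> \<Phi> ` A"
  proof
    fix Y assume "Y \<in> \<Phi> ` A'"
    then obtain F where F0: "F \<in> A'" "Y = \<Phi> F" by blast
    then have F: "F facet_of P'" "v \<in> F" by (simp_all add: A'_def)
    obtain F' where F': "F' facet_of P" "v \<in> F'" "F' \<inter> ball v e = F \<inter> ball v e"
      using local_facet_transfer[OF assms(2) cP(1) vP' assms(4) assms(5)[symmetric] F(1,2)] by blast
    have "F' \<in> A" using F'(1,2) by (simp add: A_def)
    moreover have "Y = \<Phi> F'" using F0(2) F'(3) by (simp add: \<Phi>_def)
    ultimately show "Y \<in> \<Phi> ` A" by blast
  qed
  ultimately have "\<Phi> ` A = \<Phi> ` A'" by blast
  then have "card (\<Phi> ` A) = card (\<Phi> ` A')" by simp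
  moreover have "card (\<Phi> ` A) = card A" unfolding A_def by (rule card_image[OF inj])
  moreover have "card (\<Phi> ` A') = card A'" unfolding A'_def by (rule card_image[OF inj])
  ultimately show ?thesis by (simp add: A_def A'_def)
qed

lemma ext_span:
  fixes M :: "'a::euclidean_space set"
  assumes "X \<inter> ball v e = {x. \<forall>m\<in>M. m \<bullet> x \<le> m \<bullet> v} \<inter> ball v e" "e > 0" "v extreme_point_of X"
  shows "span M = UNIV"
proof (rule ccontr)
  assume "span M \<noteq> UNIV"
  then have "dim M < DIM('a)" using dim_eq_full dim_subset_UNIV le_neq_implies_less by blast
  then obtain d where d: "d \<noteq> 0" "\<And>y. y \<in> span M \<Longrightarrow> orthogonal d y"
    using orthogonal_to_subspace_exists by blast
  have md: "\<And>m. m \<in> M \<Longrightarrow> m \<bullet> d = 0"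
    using d(2) span_base by (force simp: orthogonal_def inner_commute)
  define t where "t = e / (2 * norm d)"
  have tpos: "t > 0" using d(1) assms(2) by (simp add: t_def)
  have nt: "norm (t *\<^sub>R d) = e / 2" using d(1) assms(2) by (simp add: t_def)
  have in1: "v + t *\<^sub>R d \<in> X"
  proof -
    have "v + t *\<^sub>R d \<in> ball v e" using nt assms(2) by (simp add: dist_norm)
    moreover have "\<forall>m\<in>M. m \<bullet> (v + t *\<^sub>R d) \<le> m \<bullet> v" using md by (simp add: inner_add_right)
    ultimately show ?thesis using assms(1) by blast
  qed
  have in2: "v - t *\<^sub>R d \<in> X"
  proof -
    have "v - t *\<^sub>R d \<in> ball v e" using nt assms(2) by (simp add: dist_norm)
    moreover have "\<forall>m\<in>M. m \<bullet> (v - t *\<^sub>R d) \<le> m \<bullet> v" using md by (simp add: inner_diff_right)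
    ultimately show ?thesis using assms(1) by blast
  qed
  have "v = midpoint (v + t *\<^sub>R d) (v - t *\<^sub>R d)"
    unfolding midpoint_def by (simp add: scaleR_add_right scaleR_diff_right flip: scaleR_add_left)
  moreover have "v + t *\<^sub>R d \<noteq> v - t *\<^sub>R d"
  proof
    assume eq: "v + t *\<^sub>R d = v - t *\<^sub>R d"
    have "(v + t *\<^sub>R d) \<bullet> d = (v - t *\<^sub>R d) \<bullet> d" by (simp only: eq)
    then have "t * (d \<bullet> d) = - (t * (d \<bullet> d))" by (simp add: inner_add_left inner_diff_left)
    then have "t * (d \<bullet> d) = 0" by linarith
    then show False using tpos d(1) by simp
  qed
  ultimately have "v \<in> open_segment (v + t *\<^sub>R d) (v - t *\<^sub>R d)"
    by (metis midpoint_in_open_segment)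
  then show False using assms(3) in1 in2 unfolding extreme_point_of_def by blast
qed


lemma simplicial_cone_facets:
  fixes M :: "'a::euclidean_space set" and v :: 'a
  assumes ind: "independent M" and cM: "card M = DIM('a)"
  shows "card {F. F facet_of {x. \<forall>m\<in>M. m \<bullet> x \<le> m \<bullet> v} \<and> v \<in> F} = DIM('a)"
proof -
  define T where "T = {x. \<forall>m\<in>M. m \<bullet> x \<le> m \<bullet> v}"
  have fM: "finite M" using ind by (rule finiteI_independent)
  have z: "0 \<notin> M" using ind dependent_zero by blast
  have "\<forall>m\<in>M. \<exists>d. \<forall>m'\<in>M. d \<bullet> m' = (if m' = m then 1 else 0)"
  proof
    fix m assume "m \<in> M"
    show "\<exists>d. \<forall>m'\<in>M. d \<bullet> m' = (if m' = m then 1 else 0)"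
      using dual_exists[OF ind, of "\<lambda>m'. if m' = m then 1 else 0"] by simp
  qed
  then obtain dd where dd: "\<And>m m'. m \<in> M \<Longrightarrow> m' \<in> M \<Longrightarrow> dd m \<bullet> m' = (if m' = m then 1 else 0)"
    by metis
  define hs where "hs m = {x. m \<bullet> x \<le> m \<bullet> v}" for m
  define H where "H = hs ` M"
  have TH: "T = \<Inter>H" unfolding T_def H_def hs_def by blast
  have in_hs: "v + dd m \<in> hs m' \<longleftrightarrow> m' \<noteq> m" if "m \<in> M" "m' \<in> M" for m m'
  proof -
    have "m' \<bullet> (v + dd m) = m' \<bullet> v + (if m' = m then 1 else 0)"
      using dd[OF that] by (simp add: inner_add_right inner_commute)
    then show ?thesis by (simp add: hs_def)
  qed
  have inT: "v - dd m \<in> T" if "m \<in> M" for m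
  proof -
    have "\<forall>m'\<in>M. m' \<bullet> (v - dd m) \<le> m' \<bullet> v"
    proof
      fix m' assume "m' \<in> M"
      then have "m' \<bullet> (v - dd m) = m' \<bullet> v - (if m' = m then 1 else 0)"
        using dd[OF that] by (simp add: inner_diff_right inner_commute)
      then show "m' \<bullet> (v - dd m) \<le> m' \<bullet> v" by simp
    qed
    then show ?thesis by (simp add: T_def)
  qed
  have vT: "v \<in> T" by (simp add: T_def)
  have inj: "inj_on hs M"
  proof (rule inj_onI)
    fix m m' assume mm: "m \<in> M" "m' \<in> M" "hs m = hs m'"
    show "m = m'"
    proof (rule ccontr)
      assume ne: "m \<noteq> m'"
      have "v + dd m \<in> hs m'" using in_hs[OF mm(1,2)] ne by simp
      moreover have "v + dd m \<notin> hs m" using in_hs[OF mm(1,1)] by simp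
      ultimately show False using mm(3) by simp
    qed
  qed
  define a where "a h = inv_into M hs h" for h
  define b where "b h = a h \<bullet> v" for h
  have a_hs: "a (hs m) = m" if "m \<in> M" for m
    using inv_into_f_f[OF inj that] by (simp add: a_def)
  have fH: "finite H" using fM by (simp add: H_def)
  have faceq: "a h \<noteq> 0 \<and> h = {x. a h \<bullet> x \<le> b h}" if hH: "h \<in> H" for h
  proof -
    obtain m where m: "m \<in> M" "h = hs m" using hH unfolding H_def by blast
    then show ?thesis using z a_hs[OF m(1)] by (auto simp: b_def hs_def)
  qed
  have seq: "T = affine hull T \<inter> \<Inter>H" using TH hull_subset[of T affine] by blast
  have psub: "T \<subset> affine hull T \<inter> \<Inter>F'" if sub: "F' \<subset> H" for F'
  proof -
    obtain m where m: "m \<in> M" "hs m \<notin> F'" using sub unfolding H_def by blast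
    define x where "x = v + dd m"
    have "x \<in> \<Inter>F'"
    proof
      fix h assume "h \<in> F'"
      then obtain m' where m': "m' \<in> M" "h = hs m'" using sub unfolding H_def by blast
      then have "m' \<noteq> m" using m(2) \<open>h \<in> F'\<close> by blast
      then show "x \<in> h" using in_hs[OF m(1) m'(1)] m'(2) by (simp add: x_def)
    qed
    moreover have "x \<notin> T"
    proof
      assume "x \<in> T"
      then have "x \<in> hs m" using m(1) by (simp add: T_def hs_def)
      then show False using in_hs[OF m(1) m(1)] by (simp add: x_def)
    qed
    moreover have "x \<in> affine hull T"
    proof -
      have "v \<in> affine hull T" by (rule hull_inc[OF vT])
      moreover have "v - dd m \<in> affine hull T" by (rule hull_inc[OF inT[OF m(1)]])
      ultimately have "2 *\<^sub>R v + (-1) *\<^sub>R (v - dd m) \<in> affine hull T"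
        by (intro mem_affine[OF affine_affine_hull]) simp_all
      moreover have "2 *\<^sub>R v + (-1) *\<^sub>R (v - dd m) = x" by (simp add: x_def algebra_simps scaleR_2)
      ultimately show ?thesis by simp
    qed
    moreover have "T \<subseteq> \<Inter>F'" using TH sub by blast
    moreover have "T \<subseteq> affine hull T" by (rule hull_subset)
    ultimately show ?thesis by blast
  qed
  have facets: "C facet_of T \<longleftrightarrow> (\<exists>h\<in>H. C = T \<inter> {x. a h \<bullet> x = b h})" for C
    using facet_of_polyhedron_explicit[OF fH seq faceq psub, of C] by blast
  define fc where "fc m = T \<inter> {x. m \<bullet> x = m \<bullet> v}" for m
  have "{F. F facet_of T \<and> v \<in> F} = fc ` M"
  proof (intro set_eqI iffI)
    fix C assume "C \<in> {F. F facet_of T \<and> v \<in> F}"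
    then obtain h where h: "h \<in> H" "C = T \<inter> {x. a h \<bullet> x = b h}" using facets by blast
    then obtain m where m: "m \<in> M" "h = hs m" unfolding H_def by blast
    then have "C = fc m" using h(2) by (simp add: fc_def b_def a_hs)
    then obtain m where "m \<in> M" "C = fc m" using m by blast
    then show "C \<in> fc ` M" by blast
  next
    fix C assume "C \<in> fc ` M"
    then obtain m where m: "m \<in> M" "C = fc m" by blast
    have "hs m \<in> H" using m(1) by (simp add: H_def)
    moreover have "C = T \<inter> {x. a (hs m) \<bullet> x = b (hs m)}" using m by (simp add: fc_def b_def a_hs)
    ultimately have "C facet_of T" using facets by blast
    moreover have "v \<in> C" using m vT by (simp add: fc_def)
    ultimately show "C \<in> {F. F facet_of T \<and> v \<in> F}" by blast
  qed
  moreover have "inj_on fc M"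
  proof (rule inj_onI)
    fix m m' assume mm: "m \<in> M" "m' \<in> M" "fc m = fc m'"
    show "m = m'"
    proof (rule ccontr)
      assume ne: "m \<noteq> m'"
      have "m \<bullet> (v - dd m') = m \<bullet> v" using dd[OF mm(2,1)] ne by (simp add: inner_diff_right inner_commute)
      then have "v - dd m' \<in> fc m" using inT[OF mm(2)] by (simp add: fc_def)
      moreover have "m' \<bullet> (v - dd m') = m' \<bullet> v - 1" using dd[OF mm(2,2)] by (simp add: inner_diff_right inner_commute)
      then have "v - dd m' \<notin> fc m'" by (simp add: fc_def)
      ultimately show False using mm(3) by simp
    qed
  qed
  ultimately have "card {F. F facet_of T \<and> v \<in> F} = card M" by (simp add: card_image)
  then show ?thesis using cM by (simp add: T_def)
qed


lemma hyperplane_prop: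
  fixes a a' :: "'a::euclidean_space"
  assumes "a \<noteq> 0" "{x. a \<bullet> x = b} \<subseteq> {x. a' \<bullet> x = b'}"
  shows "\<exists>l. a' = l *\<^sub>R a \<and> b' = l * b"
proof -
  define x0 where "x0 = (b / (a \<bullet> a)) *\<^sub>R a"
  have aa: "a \<bullet> a \<noteq> 0" using assms(1) by simp
  have x0: "a \<bullet> x0 = b" using aa by (simp add: x0_def)
  define l where "l = (a' \<bullet> a) / (a \<bullet> a)"
  define d where "d = a' - l *\<^sub>R a"
  have ad: "a \<bullet> d = 0" using aa by (simp add: d_def l_def inner_diff_right inner_commute)
  have "a \<bullet> (x0 + d) = b" using x0 ad by (simp add: inner_add_right)
  then have "a' \<bullet> (x0 + d) = b'" using assms(2) by blast
  moreover have "a' \<bullet> x0 = b'" using x0 assms(2) by blast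
  ultimately have a'd: "a' \<bullet> d = 0" by (simp add: inner_add_right)
  have "d \<bullet> d = a' \<bullet> d - l * (a \<bullet> d)" by (simp add: d_def inner_diff_left inner_commute)
  then have "d \<bullet> d = 0" using ad a'd by simp
  then have "d = 0" by simp
  then have a': "a' = l *\<^sub>R a" by (simp add: d_def)
  have "b' = a' \<bullet> x0" using \<open>a' \<bullet> x0 = b'\<close> by simp
  also have "\<dots> = l * b" using x0 a' by simp
  finally show ?thesis using a' by blast
qed

locale hrep =
  fixes P :: "'a::euclidean_space set" and H :: "'a set set"
    and a :: "'a set \<Rightarrow> 'a" and b :: "'a set \<Rightarrow> real"
  assumes finH: "finite H" and PH: "P = \<Inter>H"
    and faceq: "\<And>h. h \<in> H \<Longrightarrow> a h \<noteq> 0 \<and> h = {x. a h \<bullet> x \<le> b h}"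
    and minH: "\<And>F'. F' \<subset> H \<Longrightarrow> P \<subset> \<Inter>F'"
    and fdim: "aff_dim P = DIM('a)"
begin

lemma aff_UNIV: "affine hull P = UNIV" using fdim aff_dim_eq_full by blast

lemma facet_iff: "C facet_of P \<longleftrightarrow> (\<exists>h\<in>H. C = P \<inter> {x. a h \<bullet> x = b h})"
proof -
  have seq: "P = affine hull P \<inter> \<Inter>H" using PH aff_UNIV by simp
  have psub: "P \<subset> affine hull P \<inter> \<Inter>F'" if "F' \<subset> H" for F'
    using minH[OF that] aff_UNIV by simp
  show ?thesis using facet_of_polyhedron_explicit[OF finH seq faceq psub, of C] by blast
qed

lemma P_le: "h \<in> H \<Longrightarrow> x \<in> P \<Longrightarrow> a h \<bullet> x \<le> b h"
  using PH faceq by blast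

lemma P_iff: "x \<in> P \<longleftrightarrow> (\<forall>h\<in>H. a h \<bullet> x \<le> b h)"
proof
  assume "x \<in> P" then show "\<forall>h\<in>H. a h \<bullet> x \<le> b h" using P_le by blast
next
  assume A: "\<forall>h\<in>H. a h \<bullet> x \<le> b h"
  have "x \<in> h" if "h \<in> H" for h using A that faceq[OF that] by blast
  then show "x \<in> P" using PH by blast
qed

lemma facet_inj: "inj_on (\<lambda>h. P \<inter> {x. a h \<bullet> x = b h}) H"
proof (rule inj_onI)
  fix h1 h2 assume h: "h1 \<in> H" "h2 \<in> H" and eq: "P \<inter> {x. a h1 \<bullet> x = b h1} = P \<inter> {x. a h2 \<bullet> x = b h2}"
  define C where "C = P \<inter> {x. a h1 \<bullet> x = b h1}"
  have Cf: "C facet_of P" using facet_iff h(1) by (auto simp: C_def)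
  have dC: "aff_dim C = int DIM('a) - 1" using Cf fdim by (simp add: facet_of_def)
  have a1: "a h1 \<noteq> 0" "a h2 \<noteq> 0" using faceq h by auto
  have dH: "aff_dim {x. a h1 \<bullet> x = b h1} = int DIM('a) - 1"
    using aff_dim_hyperplane[OF a1(1)] by (simp add: of_nat_diff DIM_positive)
  have CH1: "C \<subseteq> {x. a h1 \<bullet> x = b h1}" by (auto simp: C_def)
  have CH2: "C \<subseteq> {x. a h2 \<bullet> x = b h2}" using eq by (auto simp: C_def)
  have neC: "C \<noteq> {}" using Cf by (simp add: facet_of_def)
  have "affine hull C \<subseteq> {x. a h1 \<bullet> x = b h1}"
    using CH1 by (intro hull_minimal) (auto simp: affine_hyperplane)
  moreover have "aff_dim (affine hull C) = aff_dim {x. a h1 \<bullet> x = b h1}" using dC dH by simp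
  ultimately have "affine hull C = {x. a h1 \<bullet> x = b h1}"
    using neC by (intro affine_dim_equal) (auto simp: affine_hyperplane)
  moreover have "affine hull C \<subseteq> {x. a h2 \<bullet> x = b h2}"
    using CH2 by (intro hull_minimal) (auto simp: affine_hyperplane)
  ultimately have "{x. a h1 \<bullet> x = b h1} \<subseteq> {x. a h2 \<bullet> x = b h2}" by simp
  then obtain l where l: "a h2 = l *\<^sub>R a h1" "b h2 = l * b h1" using hyperplane_prop[OF a1(1)] by blast
  have "l \<noteq> 0" using l(1) a1(2) by auto
  have "l > 0"
  proof (rule ccontr)
    assume "\<not> l > 0"
    then have lneg: "l < 0" using \<open>l \<noteq> 0\<close> by simp
    have "P \<subseteq> {x. a h1 \<bullet> x = b h1}"
    proof
      fix x assume "x \<in> P"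
      then have "a h1 \<bullet> x \<le> b h1" "a h2 \<bullet> x \<le> b h2" using P_le h by auto
      then have "a h1 \<bullet> x \<le> b h1" "l * (a h1 \<bullet> x) \<le> l * b h1" using l by auto
      then have "a h1 \<bullet> x = b h1" using lneg by (smt (verit) mult_le_cancel_left_neg)
      then show "x \<in> {x. a h1 \<bullet> x = b h1}" by simp
    qed
    then have "aff_dim P \<le> aff_dim {x. a h1 \<bullet> x = b h1}" by (rule aff_dim_subset)
    then show False using fdim dH by simp
  qed
  have "h2 = {x. l * (a h1 \<bullet> x) \<le> l * b h1}" using faceq[OF h(2)] l by simp
  also have "\<dots> = {x. a h1 \<bullet> x \<le> b h1}" using \<open>l > 0\<close> by simp
  also have "\<dots> = h1" using faceq[OF h(1)] by simp
  finally show "h1 = h2" by simp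
qed

definition act where "act v = {h\<in>H. a h \<bullet> v = b h}"
definition N where "N v = a ` act v"

lemma card_facets_act:
  assumes "v \<in> P" shows "card {F. F facet_of P \<and> v \<in> F} = card (act v)"
proof -
  have "{F. F facet_of P \<and> v \<in> F} = (\<lambda>h. P \<inter> {x. a h \<bullet> x = b h}) ` act v"
  proof (intro set_eqI iffI)
    fix F assume "F \<in> {F. F facet_of P \<and> v \<in> F}"
    then obtain h where "h \<in> H" "F = P \<inter> {x. a h \<bullet> x = b h}" "v \<in> F" using facet_iff by blast
    then show "F \<in> (\<lambda>h. P \<inter> {x. a h \<bullet> x = b h}) ` act v" by (auto simp: act_def)
  next
    fix F assume "F \<in> (\<lambda>h. P \<inter> {x. a h \<bullet> x = b h}) ` act v"
    then obtain h where h: "h \<in> act v" "F = P \<inter> {x. a h \<bullet> x = b h}" by blast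
    then have "F facet_of P" using facet_iff by (auto simp: act_def)
    moreover have "v \<in> F" using h assms by (simp add: act_def)
    ultimately show "F \<in> {F. F facet_of P \<and> v \<in> F}" by blast
  qed
  moreover have "inj_on (\<lambda>h. P \<inter> {x. a h \<bullet> x = b h}) (act v)"
    using facet_inj by (rule inj_on_subset) (auto simp: act_def)
  ultimately show ?thesis by (simp add: card_image)
qed

lemma card_N: "card (N v) = card (act v)"
proof -
  have "inj_on a (act v)"
  proof (rule inj_onI)
    fix h1 h2 assume h: "h1 \<in> act v" "h2 \<in> act v" "a h1 = a h2"
    then have bb: "b h1 = b h2" by (simp add: act_def)
    have e1: "h1 = {x. a h1 \<bullet> x \<le> b h1}" using faceq[of h1] h(1) by (simp add: act_def)
    have e2: "h2 = {x. a h2 \<bullet> x \<le> b h2}" using faceq[of h2] h(2) by (simp add: act_def)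
    show "h1 = h2" using e1 e2 h(3) bb by simp
  qed
  then show ?thesis by (simp add: N_def card_image)
qed

lemma local_N:
  assumes "v \<in> P"
  obtains e where "e > 0" "P \<inter> ball v e = {x. \<forall>m\<in>N v. m \<bullet> x \<le> m \<bullet> v} \<inter> ball v e"
proof -
  define I where "I = H - act v"
  define U where "U = (\<Inter>h\<in>I. {x. a h \<bullet> x < b h})"
  have "open U" unfolding U_def using finH I_def
    by (intro open_INT) (auto simp: open_halfspace_lt)
  moreover have "v \<in> U"
  proof -
    have "a h \<bullet> v < b h" if "h \<in> I" for h
      using that P_le[OF _ assms] by (force simp: I_def act_def)
    then show ?thesis by (simp add: U_def)
  qed
  ultimately obtain e where e: "e > 0" "ball v e \<subseteq> U" using open_contains_ball by blast
  have "P \<inter> ball v e = {x. \<forall>m\<in>N v. m \<bullet> x \<le> m \<bullet> v} \<inter> ball v e"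
  proof (intro set_eqI iffI)
    fix x assume x: "x \<in> P \<inter> ball v e"
    have "\<forall>m\<in>N v. m \<bullet> x \<le> m \<bullet> v"
    proof
      fix m assume "m \<in> N v"
      then obtain h where h: "h \<in> act v" "m = a h" by (auto simp: N_def)
      then show "m \<bullet> x \<le> m \<bullet> v" using P_le x by (auto simp: act_def)
    qed
    then show "x \<in> {x. \<forall>m\<in>N v. m \<bullet> x \<le> m \<bullet> v} \<inter> ball v e" using x by blast
  next
    fix x assume x: "x \<in> {x. \<forall>m\<in>N v. m \<bullet> x \<le> m \<bullet> v} \<inter> ball v e"
    have "\<forall>h\<in>H. a h \<bullet> x \<le> b h"
    proof
      fix h assume hH: "h \<in> H"
      show "a h \<bullet> x \<le> b h"
      proof (cases "h \<in> act v")
        case True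
        then have "a h \<in> N v" by (simp add: N_def)
        then show ?thesis using x True by (auto simp: act_def)
      next
        case False
        then have "h \<in> I" using hH by (simp add: I_def)
        moreover have "x \<in> U" using x e(2) by blast
        ultimately show ?thesis by (auto simp: U_def)
      qed
    qed
    then show "x \<in> P \<inter> ball v e" using x P_iff by blast
  qed
  then show ?thesis using that e(1) by blast
qed

end

lemma hrep_exists:
  fixes P :: "'a::euclidean_space set"
  assumes "polytope P" "aff_dim P = DIM('a)"
  obtains H a b where "hrep P H a b"
proof -
  have "polyhedron P" using assms(1) by (rule polytope_imp_polyhedron)
  then obtain F where F: "finite F" "P = affine hull P \<inter> \<Inter>F"
      "\<forall>h\<in>F. \<exists>a b. a \<noteq> 0 \<and> h = {x. a \<bullet> x \<le> b}"
      "\<forall>F'. F' \<subset> F \<longrightarrow> P \<subset> affine hull P \<inter> \<Inter>F'"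
    unfolding polyhedron_Int_affine_minimal by blast
  obtain a b where ab: "\<And>h. h \<in> F \<Longrightarrow> a h \<noteq> 0 \<and> h = {x. a h \<bullet> x \<le> b h}"
    using F(3) by metis
  have aU: "affine hull P = UNIV" using assms(2) aff_dim_eq_full by blast
  have "hrep P F a b"
  proof
    show "finite F" by (rule F(1))
    show "P = \<Inter>F" using F(2) aU by simp
    show "\<And>h. h \<in> F \<Longrightarrow> a h \<noteq> 0 \<and> h = {x. a h \<bullet> x \<le> b h}" by (rule ab)
    show "\<And>F'. F' \<subset> F \<Longrightarrow> P \<subset> \<Inter>F'" using F(4) aU by simp
    show "aff_dim P = DIM('a)" by (rule assms(2))
  qed
  then show ?thesis by (rule that)
qed


lemma indep_union_orth:
  fixes A B :: "'a::euclidean_space set"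
  assumes iA: "independent A" and iB: "independent B" and orth: "\<forall>x\<in>A. \<forall>y\<in>B. x \<bullet> y = 0"
  shows "independent (A \<union> B)"
proof -
  have fA: "finite A" and fB: "finite B" using iA iB finiteI_independent by blast+
  have zA: "0 \<notin> A" using iA dependent_zero by blast
  have disj: "A \<inter> B = {}"
  proof (rule ccontr)
    assume "A \<inter> B \<noteq> {}"
    then obtain x where "x \<in> A" "x \<in> B" by blast
    then have "x \<bullet> x = 0" using orth by blast
    then show False using \<open>x \<in> A\<close> zA by simp
  qed
  have eA: "\<forall>c. (\<Sum>v\<in>A. c v *\<^sub>R v) = 0 \<longrightarrow> (\<forall>v\<in>A. c v = 0)" using iA independent_explicit by blast
  have eB: "\<forall>c. (\<Sum>v\<in>B. c v *\<^sub>R v) = 0 \<longrightarrow> (\<forall>v\<in>B. c v = 0)" using iB independent_explicit by blast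
  have "\<forall>v\<in>A \<union> B. c v = 0" if s0: "(\<Sum>v\<in>A \<union> B. c v *\<^sub>R v) = 0" for c
  proof -
    define u where "u = (\<Sum>v\<in>A. c v *\<^sub>R v)"
    define w where "w = (\<Sum>v\<in>B. c v *\<^sub>R v)"
    have uw: "u + w = 0" using s0 sum.union_disjoint[OF fA fB disj, of "\<lambda>v. c v *\<^sub>R v"] by (simp add: u_def w_def)
    have uy: "u \<bullet> y = 0" if "y \<in> B" for y
      using orth that by (simp add: u_def inner_sum_left)
    have "u \<bullet> w = (\<Sum>y\<in>B. c y * (u \<bullet> y))" by (simp add: w_def inner_sum_right)
    also have "\<dots> = 0" using uy by simp
    finally have "u \<bullet> w = 0" .
    moreover have "w = - u" using uw by (simp add: eq_neg_iff_add_eq_0 add.commute)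
    ultimately have "u \<bullet> u = 0" by simp
    then have u0: "u = 0" by simp
    then have w0: "w = 0" using uw by simp
    have "\<forall>v\<in>A. c v = 0" using eA u0 by (simp add: u_def)
    moreover have "\<forall>v\<in>B. c v = 0" using eB w0 by (simp add: w_def)
    ultimately show ?thesis by blast
  qed
  then show ?thesis using fA fB independent_explicit by blast
qed

section \<open>The Weyl group setting\<close>

locale weyl =
  fixes R S :: "'a::euclidean_space set" and \<Lambda> :: "'a set"
  assumes rs: "root_system R"
    and ss: "simple_system R S"
    and finL: "finite \<Lambda>"
    and LC: "\<Lambda> \<subseteq> chamber S"
    and full_dim: "aff_dim (W_polytope S \<Lambda>) = int DIM('a)"
    and nondeg: "\<forall>v. v extreme_point_of (W_polytope S \<Lambda>) \<longrightarrow> v \<notin> frontier (chamber S)"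
begin

abbreviation "W \<equiv> parabolic S"
abbreviation "P \<equiv> W_polytope S \<Lambda>"
definition "orb = {w x | w x. w \<in> W \<and> x \<in> \<Lambda>}"

lemma SR: "S \<subseteq> R" using ss by (simp add: simple_system_def)
lemma indS: "independent S" using ss by (simp add: simple_system_def)
lemma finS: "finite S" using indS by (rule finiteI_independent)
lemma finR: "finite R" using rs by (simp add: root_system_def)
lemma zR: "0 \<notin> R" using rs by (simp add: root_system_def)
lemma S_nz: "a \<in> S \<Longrightarrow> a \<noteq> 0" using SR zR by blast
lemma S_pos: "a \<in> S \<Longrightarrow> a \<bullet> a > 0" using S_nz by simp
lemma refl_R: "a \<in> R \<Longrightarrow> b \<in> R \<Longrightarrow> refl a b \<in> R" using rs by (simp add: root_system_def)
lemma span_R: "span R = UNIV" using rs by (simp add: root_system_def)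

lemma W_finite: "finite W"
proof -
  have inj: "inj_on (\<lambda>w. restrict w R) W"
  proof (rule inj_onI)
    fix w w' assume w: "w \<in> W" "w' \<in> W" "restrict w R = restrict w' R"
    have "w x = w' x" for x
    proof (rule linear_eq_on_span[OF parab_linear[OF w(1)] parab_linear[OF w(2)]])
      show "\<And>y. y \<in> R \<Longrightarrow> w y = w' y" using w(3) by (metis restrict_apply')
      show "x \<in> span R" using span_R by simp
    qed
    then show "w = w'" by auto
  qed
  have "(\<lambda>w. restrict w R) ` W \<subseteq> Pi\<^sub>E R (\<lambda>_. R)"
    using parab_root[OF rs SR] by auto
  moreover have "finite (Pi\<^sub>E R (\<lambda>_. R))" using finR by (simp add: finite_PiE)
  ultimately have "finite ((\<lambda>w. restrict w R) ` W)" by (rule finite_subset)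
  then show ?thesis using inj finite_image_iff by blast
qed

lemma orb_finite: "finite orb"
proof -
  have "orb = (\<lambda>(w, x). w x) ` (W \<times> \<Lambda>)" unfolding orb_def by auto
  then show ?thesis using W_finite finL by simp
qed

lemma P_def': "P = convex hull orb" by (simp add: W_polytope_def orb_def)

lemma P_polytope: "polytope P"
  unfolding P_def' polytope_def using orb_finite by blast

lemma orb_image: assumes "w \<in> W" shows "w ` orb = orb"
proof
  show "w ` orb \<subseteq> orb"
  proof
    fix y assume "y \<in> w ` orb"
    then obtain w' x where y: "y = w (w' x)" "w' \<in> W" "x \<in> \<Lambda>" unfolding orb_def by blast
    have "y = (w \<circ> w') x" using y(1) by simp
    then show "y \<in> orb" using parab_comp[OF assms y(2)] y(3) unfolding orb_def by blast
  qed
  show "orb \<subseteq> w ` orb"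
  proof
    fix y assume "y \<in> orb"
    then obtain w' x where y: "y = w' x" "w' \<in> W" "x \<in> \<Lambda>" unfolding orb_def by blast
    obtain v where v: "v \<in> W" "v \<circ> w = id" "w \<circ> v = id" using parab_inv[OF assms] by blast
    have "(v \<circ> w') x \<in> orb" using parab_comp[OF v(1) y(2)] y(3) unfolding orb_def by blast
    moreover have "y = w ((v \<circ> w') x)" using fun_cong[OF v(3), of "w' x"] y(1) by simp
    ultimately show "y \<in> w ` orb" by blast
  qed
qed

lemma P_image: "w \<in> W \<Longrightarrow> w ` P = P"
  unfolding P_def' by (simp add: convex_hull_linear_image[OF parab_linear] orb_image)

lemma P_mem: "w \<in> W \<Longrightarrow> x \<in> P \<Longrightarrow> w x \<in> P"
  using P_image by blast

lemma P_refl: "a \<in> S \<Longrightarrow> x \<in> P \<Longrightarrow> refl a x \<in> P"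
  using P_mem parab_refl by blast

lemma rho_exists: "\<exists>\<rho>. \<forall>a\<in>S. \<rho> \<bullet> a = 1"
  using dual_exists[OF indS, of "\<lambda>_. 1"] by blast

lemma conj_chamber: "\<exists>w\<in>W. w x \<in> chamber S"
proof -
  obtain \<rho> where rho: "\<forall>a\<in>S. \<rho> \<bullet> a = 1" using rho_exists by blast
  define Orb where "Orb = (\<lambda>w. w x) ` W"
  have fOrb: "finite Orb" using W_finite by (simp add: Orb_def)
  have "id \<in> W" unfolding parabolic_def by (rule gen_group.gen_id)
  then have "x \<in> Orb" unfolding Orb_def by (rule image_eqI[rotated]) simp
  then have neOrb: "Orb \<noteq> {}" by blast
  obtain y where y: "y \<in> Orb" "\<forall>z\<in>Orb. \<rho> \<bullet> z \<le> \<rho> \<bullet> y"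
    using finite_max_obtain[OF fOrb neOrb, of "\<lambda>z. \<rho> \<bullet> z"] by blast
  obtain w where w: "w \<in> W" "y = w x" using y(1) unfolding Orb_def by blast
  have "\<forall>a\<in>S. y \<bullet> a \<ge> 0"
  proof (rule ballI, rule ccontr)
    fix a assume a0: "a \<in> S" "\<not> y \<bullet> a \<ge> 0"
    then have a: "a \<in> S" "y \<bullet> a < 0" by auto
    have aw: "refl a \<circ> w \<in> W" using parab_comp[OF parab_refl[OF a(1)] w(1)] .
    have "refl a y = (refl a \<circ> w) x" using w(2) by simp
    then have zOrb: "refl a y \<in> Orb" unfolding Orb_def by (rule image_eqI[OF _ aw])
    have "\<rho> \<bullet> refl a y = \<rho> \<bullet> y - (2 * (y \<bullet> a)) / (a \<bullet> a)"
      using refl_dot[of a y \<rho>] rho a(1) by (simp add: inner_commute)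
    moreover have "(2 * (y \<bullet> a)) / (a \<bullet> a) < 0"
      using a S_pos[OF a(1)] by (simp add: divide_neg_pos)
    ultimately have "\<rho> \<bullet> refl a y > \<rho> \<bullet> y" by simp
    then show False using y(2) zOrb by force
  qed
  then have "y \<in> chamber S" by (simp add: chamber_def)
  then show ?thesis using w by blast
qed


lemma extreme_W:
  assumes "w \<in> W" "v extreme_point_of P" shows "w v extreme_point_of P"
proof -
  have "{v} face_of P" using assms(2) by (simp add: face_of_singleton)
  then have "w ` {v} face_of w ` P"
    using face_of_linear_image[OF parab_linear[OF assms(1)] parab_inj[OF assms(1)]] by blast
  then show ?thesis using P_image[OF assms(1)] by (simp add: face_of_singleton)
qed

lemma frontier_wall:
  assumes "x \<in> chamber S" "a \<in> S" "x \<bullet> a = 0" shows "x \<in> frontier (chamber S)"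
proof -
  have "x \<in> closure (chamber S)" using assms(1) closure_subset by blast
  moreover have "x \<notin> interior (chamber S)"
  proof
    assume "x \<in> interior (chamber S)"
    then obtain e where e: "e > 0" "ball x e \<subseteq> chamber S" by (auto simp: mem_interior)
    have an: "norm a > 0" using S_nz[OF assms(2)] by simp
    define y where "y = x - (e / 2 / norm a) *\<^sub>R a"
    have "dist x y = e / 2" using an e(1) by (simp add: y_def dist_norm)
    then have "y \<in> chamber S" using e by auto
    then have "y \<bullet> a \<ge> 0" using assms(2) by (simp add: chamber_def)
    moreover have "y \<bullet> a = - (e / 2 / norm a) * (a \<bullet> a)"
      using assms(3) by (simp add: y_def inner_diff_left)
    moreover have "(e / 2 / norm a) * (a \<bullet> a) > 0" using an e(1) S_pos[OF assms(2)] by simp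
    ultimately show False by linarith
  qed
  ultimately show ?thesis by (simp add: frontier_def)
qed

lemma root_coeffs:
  assumes "b \<in> R"
  obtains c where "b = (\<Sum>a\<in>S. c a *\<^sub>R a)" "(\<forall>a\<in>S. c a \<ge> 0) \<or> (\<forall>a\<in>S. c a \<le> 0)"
proof -
  have H: "\<forall>b\<in>R. \<exists>c. b = (\<Sum>a\<in>S. c a *\<^sub>R a) \<and> ((\<forall>a\<in>S. c a \<ge> 0) \<or> (\<forall>a\<in>S. c a \<le> 0))"
    using conjunct2[OF conjunct2[OF ss[unfolded simple_system_def]]] .
  obtain c where "b = (\<Sum>a\<in>S. c a *\<^sub>R a) \<and> ((\<forall>a\<in>S. c a \<ge> 0) \<or> (\<forall>a\<in>S. c a \<le> 0))"
    using bspec[OF H assms] by blast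
  then show ?thesis using that by blast
qed

lemma ext_not_wall:
  assumes "v extreme_point_of P" "b \<in> R" shows "v \<bullet> b \<noteq> 0"
proof
  assume vb: "v \<bullet> b = 0"
  obtain w where w: "w \<in> W" "w v \<in> chamber S" using conj_chamber by blast
  define u where "u = w v"
  have uext: "u extreme_point_of P" using extreme_W[OF w(1) assms(1)] by (simp add: u_def)
  have uC: "u \<in> chamber S" using w(2) by (simp add: u_def)
  have b'R: "w b \<in> R" using parab_root[OF rs SR w(1) assms(2)] .
  have "w v \<bullet> w b = v \<bullet> b" by (rule parab_inner[OF w(1)])
  then have ub: "u \<bullet> w b = 0" using vb by (simp add: u_def)
  obtain c where c: "w b = (\<Sum>a\<in>S. c a *\<^sub>R a)" "(\<forall>a\<in>S. c a \<ge> 0) \<or> (\<forall>a\<in>S. c a \<le> 0)"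
    using root_coeffs[OF b'R] by blast
  have sum0: "(\<Sum>a\<in>S. c a * (u \<bullet> a)) = 0"
  proof -
    have "u \<bullet> (\<Sum>a\<in>S. c a *\<^sub>R a) = (\<Sum>a\<in>S. c a * (u \<bullet> a))" by (simp add: inner_sum_right)
    then show ?thesis using ub c(1) by simp
  qed
  have ua: "\<forall>a\<in>S. u \<bullet> a \<ge> 0" using uC by (simp add: chamber_def)
  have each: "\<forall>a\<in>S. c a * (u \<bullet> a) = 0"
    using c(2)
  proof
    assume cp: "\<forall>a\<in>S. c a \<ge> 0"
    have nn: "\<And>a. a \<in> S \<Longrightarrow> 0 \<le> c a * (u \<bullet> a)" using cp ua by simp
    have "(\<Sum>a\<in>S. c a * (u \<bullet> a)) = 0 \<longleftrightarrow> (\<forall>a\<in>S. c a * (u \<bullet> a) = 0)"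
      using finS nn by (rule sum_nonneg_eq_0_iff)
    then show ?thesis using sum0 by blast
  next
    assume cn: "\<forall>a\<in>S. c a \<le> 0"
    have nn: "\<And>a. a \<in> S \<Longrightarrow> 0 \<le> - (c a * (u \<bullet> a))"
      using cn ua by (simp add: mult_nonpos_nonneg)
    have s0: "(\<Sum>a\<in>S. - (c a * (u \<bullet> a))) = 0" using sum0 by (simp only: sum_negf neg_equal_0_iff_equal)
    have "(\<Sum>a\<in>S. - (c a * (u \<bullet> a))) = 0 \<longleftrightarrow> (\<forall>a\<in>S. - (c a * (u \<bullet> a)) = 0)"
      using finS nn by (rule sum_nonneg_eq_0_iff)
    then have "\<forall>a\<in>S. - (c a * (u \<bullet> a)) = 0" using s0 by blast
    then show ?thesis by simp
  qed
  have "\<exists>a\<in>S. c a \<noteq> 0"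
  proof (rule ccontr)
    assume "\<not> ?thesis"
    then have "w b = 0" using c(1) by simp
    then show False using b'R zR by simp
  qed
  then obtain a where a: "a \<in> S" "c a \<noteq> 0" by blast
  have "c a * (u \<bullet> a) = 0" using each a(1) by blast
  then have "u \<bullet> a = 0" using a(2) by simp
  then have "u \<in> frontier (chamber S)" using frontier_wall[OF uC a(1)] by simp
  then show False using nondeg uext by blast
qed

lemma simple_obtuse:
  assumes "a \<in> S" "b \<in> S" "a \<noteq> b" shows "a \<bullet> b \<le> 0"
proof (rule ccontr)
  assume "\<not> ?thesis"
  then have ab: "a \<bullet> b > 0" by simp
  define k where "k = 2 * (b \<bullet> a) / (a \<bullet> a)"
  have kpos: "k > 0" using ab S_pos[OF assms(1)] by (simp add: k_def inner_commute)
  have gR: "refl a b \<in> R" using refl_R SR assms by blast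
  have g: "refl a b = b - k *\<^sub>R a" by (simp add: refl_def k_def)
  obtain c where c: "refl a b = (\<Sum>x\<in>S. c x *\<^sub>R x)" "(\<forall>x\<in>S. c x \<ge> 0) \<or> (\<forall>x\<in>S. c x \<le> 0)"
    using root_coeffs[OF gR] by blast
  define d where "d x = (if x = b then 1 else 0) - (if x = a then k else 0)" for x
  have "(\<Sum>x\<in>S. d x *\<^sub>R x) = (\<Sum>x\<in>S. (if x = b then x else 0)) - (\<Sum>x\<in>S. (if x = a then k *\<^sub>R x else 0))"
    unfolding d_def scaleR_left_diff_distrib sum_subtractf by (intro arg_cong2[where f = minus] sum.cong) auto
  also have "\<dots> = b - k *\<^sub>R a" using assms finS by (simp add: sum.delta')
  finally have dsum: "(\<Sum>x\<in>S. d x *\<^sub>R x) = refl a b" using g by simp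
  have "(\<Sum>x\<in>S. (c x - d x) *\<^sub>R x) = 0"
    using c(1) dsum by (simp add: scaleR_left_diff_distrib sum_subtractf)
  moreover have ind': "\<forall>c. (\<Sum>v\<in>S. c v *\<^sub>R v) = 0 \<longrightarrow> (\<forall>v\<in>S. c v = 0)"
    using indS independent_explicit by blast
  ultimately have "\<forall>x\<in>S. c x - d x = 0" using ind'[rule_format, of "\<lambda>x. c x - d x"] by blast
  then have "c b = 1" "c a = - k" using assms by (auto simp: d_def)
  then show False using c(2) kpos assms by force
qed

lemma perp_lemma:
  assumes "a \<in> S" "x \<in> P" "x \<bullet> a = 0" "\<forall>y\<in>P. n \<bullet> y \<le> b" "n \<bullet> x = b"
  shows "n \<bullet> a = 0"
proof -
  have cvx: "convex P" by (rule polytope_imp_convex[OF P_polytope])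
  have cpt: "compact P" by (rule polytope_imp_compact[OF P_polytope])
  have le2: "\<forall>y\<in>P. refl a n \<bullet> y \<le> b"
    using assms(4) P_refl[OF assms(1)] by (simp add: refl_sym)
  define D where "D = (P \<inter> {y. n \<bullet> y = b}) \<inter> (P \<inter> {y. refl a n \<bullet> y = b})"
  have "D face_of P" unfolding D_def
    by (intro face_of_Int face_of_Int_supporting_hyperplane_le cvx) (use assms(4) le2 in auto)
  have xD: "x \<in> D" using assms(2,3,5) by (simp add: D_def refl_sym refl_fix)
  have "compact D" by (rule face_of_imp_compact[OF cvx cpt \<open>D face_of P\<close>])
  moreover have "convex D" using \<open>D face_of P\<close> by (rule face_of_imp_convex)
  ultimately obtain u where u: "u extreme_point_of D" using extreme_point_exists_convex xD by blast
  have uP: "u extreme_point_of P" using u extreme_point_of_face[OF \<open>D face_of P\<close>] by blast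
  have uD: "u \<in> D" using u by (simp add: extreme_point_of_def)
  have "n \<bullet> refl a u = b" using uD by (simp add: D_def refl_sym[symmetric])
  moreover have "n \<bullet> u = b" using uD by (simp add: D_def)
  ultimately have "(2 * (u \<bullet> a) / (a \<bullet> a)) * (a \<bullet> n) = 0"
    using refl_dot[of a u n] by (simp add: inner_commute)
  moreover have "u \<bullet> a \<noteq> 0" using ext_not_wall[OF uP] SR assms(1) by blast
  moreover have "a \<bullet> a \<noteq> 0" using S_pos[OF assms(1)] by simp
  ultimately show ?thesis by (simp add: inner_commute)
qed


lemma chamber_Inter: "chamber K = (\<Inter>a\<in>K. {x. 0 \<le> a \<bullet> x})"
  by (auto simp: chamber_def inner_commute)

lemma chamber_polyhedron: "K \<subseteq> S \<Longrightarrow> polyhedron (chamber K)"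
  unfolding chamber_Inter
  by (intro polyhedron_Inter) (auto intro: finite_subset[OF _ finS] simp: polyhedron_halfspace_ge)

lemma chamber_closed: "closed (chamber K)"
  unfolding chamber_Inter by (intro closed_INT) (simp add: closed_halfspace_ge)

lemma chamber_mono: "K \<subseteq> S \<Longrightarrow> chamber S \<subseteq> chamber K"
  by (auto simp: chamber_def)

lemma P_polyhedron: "polyhedron P" by (rule polytope_imp_polyhedron[OF P_polytope])
lemma P_convex: "convex P" by (rule polytope_imp_convex[OF P_polytope])
lemma P_compact: "compact P" by (rule polytope_imp_compact[OF P_polytope])
lemma P_ne: "P \<noteq> {}" using full_dim by auto

lemma Q_polytope: "K \<subseteq> S \<Longrightarrow> polytope (P \<inter> chamber K)"
  by (rule polytope_Int_polyhedron[OF P_polytope chamber_polyhedron])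

lemma Q_polyhedron: "K \<subseteq> S \<Longrightarrow> polyhedron (P \<inter> chamber K)"
  by (rule polytope_imp_polyhedron[OF Q_polytope])

lemma ext_interior:
  assumes "v extreme_point_of P"
  obtains w where "w \<in> W" "w v extreme_point_of P" "w v \<in> interior (chamber S)"
proof -
  obtain w where w: "w \<in> W" "w v \<in> chamber S" using conj_chamber by blast
  have ext: "w v extreme_point_of P" by (rule extreme_W[OF w(1) assms])
  then have "w v \<notin> frontier (chamber S)" using nondeg by blast
  then have "w v \<in> interior (chamber S)"
    using w(2) closure_closed[OF chamber_closed[of S]] by (simp add: frontier_def)
  then show ?thesis using that w(1) ext by blast
qed

lemma interior_ball_K:
  assumes "K \<subseteq> S" "u \<in> interior (chamber S)"
  obtains e where "e > 0" "ball u e \<subseteq> chamber K"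
proof -
  have "u \<in> interior (chamber K)" using assms interior_mono[OF chamber_mono[OF assms(1)]] by blast
  then show ?thesis using that by (auto simp: mem_interior)
qed

lemma Q_fulldim: assumes "K \<subseteq> S" shows "aff_dim (P \<inter> chamber K) = DIM('a)"
proof -
  obtain u0 where "u0 extreme_point_of P"
    using extreme_point_exists_convex[OF P_compact P_convex P_ne] by blast
  then obtain w where w: "w \<in> W" "w u0 extreme_point_of P" "w u0 \<in> interior (chamber S)"
    using ext_interior by blast
  define u where "u = w u0"
  obtain e where e: "e > 0" "ball u e \<subseteq> chamber K"
    using interior_ball_K[OF assms] w(3) u_def by blast
  have uP: "u \<in> P" using w(2) by (simp add: u_def extreme_point_of_def)
  have ne: "P \<inter> ball u e \<noteq> {}" using uP e(1) by auto
  have "aff_dim (P \<inter> ball u e) = aff_dim P"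
    by (rule aff_dim_convex_Int_open[OF P_convex open_ball ne])
  moreover have "aff_dim (P \<inter> ball u e) \<le> aff_dim (P \<inter> chamber K)"
    using e(2) by (intro aff_dim_subset) blast
  moreover have "aff_dim (P \<inter> chamber K) \<le> DIM('a)" by (rule aff_dim_le_DIM)
  ultimately show ?thesis using full_dim by simp
qed

lemma facet_W:
  assumes "w \<in> W" "F facet_of P" shows "w ` F facet_of P"
proof -
  have lin: "linear w" and inj: "inj w" using parab_linear parab_inj assms(1) by blast+
  have "F face_of P" "F \<noteq> {}" "aff_dim F = aff_dim P - 1" using assms(2) by (auto simp: facet_of_def)
  then have "w ` F face_of w ` P" "w ` F \<noteq> {}" "aff_dim (w ` F) = aff_dim (w ` P) - 1"
    using face_of_linear_image[OF lin inj] aff_dim_injective_linear_image[OF lin inj] by auto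
  then show ?thesis using P_image[OF assms(1)] by (simp add: facet_of_def)
qed

lemma card_facets_W:
  assumes "w \<in> W"
  shows "card {F. F facet_of P \<and> w v \<in> F} = card {F. F facet_of P \<and> v \<in> F}"
proof -
  obtain w' where w': "w' \<in> W" "w' \<circ> w = id" "w \<circ> w' = id" using parab_inv[OF assms] by blast
  have inj: "inj w" using parab_inj[OF assms] .
  have "{F. F facet_of P \<and> w v \<in> F} = (image w) ` {F. F facet_of P \<and> v \<in> F}"
  proof (intro set_eqI iffI)
    fix G assume G: "G \<in> {F. F facet_of P \<and> w v \<in> F}"
    define F where "F = w' ` G"
    have "w ` F = G" unfolding F_def image_comp w'(3) by simp
    moreover have "F facet_of P" using facet_W[OF w'(1)] G by (simp add: F_def)
    moreover have "v \<in> F"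
    proof -
      have "w' (w v) \<in> F" using G by (simp add: F_def)
      then show ?thesis using fun_cong[OF w'(2), of v] by simp
    qed
    ultimately show "G \<in> (image w) ` {F. F facet_of P \<and> v \<in> F}" by blast
  next
    fix G assume "G \<in> (image w) ` {F. F facet_of P \<and> v \<in> F}"
    then obtain F where F: "F facet_of P" "v \<in> F" "G = w ` F" by blast
    then show "G \<in> {F. F facet_of P \<and> w v \<in> F}" using facet_W[OF assms F(1)] by blast
  qed
  moreover have "inj_on (image w) {F. F facet_of P \<and> v \<in> F}"
    using inj by (simp add: inj_on_def inj_image_eq_iff)
  ultimately show ?thesis by (simp add: card_image)
qed

lemma simple_back:
  assumes "K \<subseteq> S" "simple_polytope (P \<inter> chamber K)"
  shows "simple_polytope P"
  unfolding simple_polytope_def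
proof (intro conjI allI impI)
  show "polytope P" by (rule P_polytope)
  fix v assume v: "v extreme_point_of P"
  obtain w where w: "w \<in> W" "w v extreme_point_of P" "w v \<in> interior (chamber S)"
    using ext_interior[OF v] by blast
  define u where "u = w v"
  obtain e where e: "e > 0" "ball u e \<subseteq> chamber K"
    using interior_ball_K[OF assms(1)] w(3) u_def by blast
  have uP: "u \<in> P" using w(2) by (simp add: u_def extreme_point_of_def)
  have eq: "P \<inter> ball u e = (P \<inter> chamber K) \<inter> ball u e" using e(2) by blast
  have "card {F. F facet_of P \<and> u \<in> F} = card {F. F facet_of (P \<inter> chamber K) \<and> u \<in> F}"
    by (rule local_facets_card[OF P_polyhedron Q_polyhedron[OF assms(1)] uP e(1) eq])
  moreover have "u extreme_point_of (P \<inter> chamber K)"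
  proof -
    have "u \<in> chamber K" using e by auto
    then show ?thesis using w(2) unfolding u_def extreme_point_of_def by blast
  qed
  then have "card {F. F facet_of (P \<inter> chamber K) \<and> u \<in> F} = DIM('a)"
    using assms(2) by (simp add: simple_polytope_def)
  moreover have "card {F. F facet_of P \<and> u \<in> F} = card {F. F facet_of P \<and> v \<in> F}"
    unfolding u_def by (rule card_facets_W[OF w(1)])
  ultimately show "card {F. F facet_of P \<and> v \<in> F} = DIM('a)" by simp
qed


lemma simple_fwd:
  assumes KS: "K \<subseteq> S" and sP: "simple_polytope P"
  shows "simple_polytope (P \<inter> chamber K)"
  unfolding simple_polytope_def
proof (intro conjI allI impI)
  show "polytope (P \<inter> chamber K)" by (rule Q_polytope[OF KS])
  fix v assume vQ: "v extreme_point_of (P \<inter> chamber K)"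
  obtain H a b where hr: "hrep P H a b" using hrep_exists[OF P_polytope full_dim] by blast
  interpret hr: hrep P H a b by (rule hr)
  have vP: "v \<in> P" and vK: "v \<in> chamber K" using vQ by (auto simp: extreme_point_of_def)
  define J where "J = {\<alpha>\<in>K. v \<bullet> \<alpha> = 0}"
  define M where "M = hr.N v \<union> uminus ` J"
  have finK: "finite K" using KS finS finite_subset by blast
  obtain e1 where e1: "e1 > 0" "P \<inter> ball v e1 = {x. \<forall>m\<in>hr.N v. m \<bullet> x \<le> m \<bullet> v} \<inter> ball v e1"
    using hr.local_N[OF vP] by blast
  define U where "U = (\<Inter>\<alpha>\<in>K - J. {x. 0 < \<alpha> \<bullet> x})"
  have "open U" unfolding U_def using finK by (intro open_INT) (auto simp: open_halfspace_gt)
  moreover have "v \<in> U"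
  proof -
    have "0 < \<alpha> \<bullet> v" if "\<alpha> \<in> K - J" for \<alpha>
    proof -
      have "v \<bullet> \<alpha> \<ge> 0" using vK that by (simp add: chamber_def)
      moreover have "v \<bullet> \<alpha> \<noteq> 0" using that by (simp add: J_def)
      ultimately show ?thesis by (simp add: inner_commute)
    qed
    then show ?thesis by (simp add: U_def)
  qed
  ultimately obtain e2 where e2: "e2 > 0" "ball v e2 \<subseteq> U" using open_contains_ball by blast
  define e where "e = min e1 e2"
  have e: "e > 0" using e1 e2 by (simp add: e_def)
  have loc: "(P \<inter> chamber K) \<inter> ball v e = {x. \<forall>m\<in>M. m \<bullet> x \<le> m \<bullet> v} \<inter> ball v e"
  proof (intro set_eqI iffI)
    fix x assume x: "x \<in> (P \<inter> chamber K) \<inter> ball v e"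
    then have "x \<in> P \<inter> ball v e1" by (auto simp: e_def)
    then have xN: "\<forall>m\<in>hr.N v. m \<bullet> x \<le> m \<bullet> v" using e1(2) by blast
    have xJ: "\<forall>m\<in>uminus ` J. m \<bullet> x \<le> m \<bullet> v"
    proof
      fix m assume "m \<in> uminus ` J"
      then obtain \<alpha> where \<alpha>: "\<alpha> \<in> J" "m = - \<alpha>" by blast
      have "x \<bullet> \<alpha> \<ge> 0" using x \<alpha>(1) by (simp add: chamber_def J_def)
      moreover have "v \<bullet> \<alpha> = 0" using \<alpha>(1) by (simp add: J_def)
      ultimately show "m \<bullet> x \<le> m \<bullet> v" using \<alpha>(2) by (simp add: inner_commute)
    qed
    have "\<forall>m\<in>M. m \<bullet> x \<le> m \<bullet> v" unfolding M_def using xN xJ by blast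
    then show "x \<in> {x. \<forall>m\<in>M. m \<bullet> x \<le> m \<bullet> v} \<inter> ball v e" using x by blast
  next
    fix x assume x: "x \<in> {x. \<forall>m\<in>M. m \<bullet> x \<le> m \<bullet> v} \<inter> ball v e"
    have xb1: "x \<in> ball v e1" and xb2: "x \<in> ball v e2" using x by (auto simp: e_def)
    have "\<forall>m\<in>hr.N v. m \<bullet> x \<le> m \<bullet> v" using x by (simp add: M_def)
    then have xP: "x \<in> P" using e1(2) xb1 by blast
    have xU: "x \<in> U" using xb2 e2(2) by blast
    have "x \<bullet> \<alpha> \<ge> 0" if aK: "\<alpha> \<in> K" for \<alpha>
    proof (cases "\<alpha> \<in> J")
      case True
      then have "- \<alpha> \<in> M" by (simp add: M_def)
      then have "(- \<alpha>) \<bullet> x \<le> (- \<alpha>) \<bullet> v" using x by blast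
      moreover have "v \<bullet> \<alpha> = 0" using True by (simp add: J_def)
      ultimately show ?thesis by (simp add: inner_commute)
    next
      case False
      then have "\<alpha> \<in> K - J" using aK by blast
      then have "0 < \<alpha> \<bullet> x" using xU by (simp add: U_def)
      then show ?thesis by (simp add: inner_commute)
    qed
    then have "x \<in> chamber K" by (simp add: chamber_def)
    then show "x \<in> (P \<inter> chamber K) \<inter> ball v e" using xP x by blast
  qed
  have spanM: "span M = UNIV" by (rule ext_span[OF loc e vQ])
  define G where "G = \<Inter> (insert P ((\<lambda>h. P \<inter> {x. a h \<bullet> x = b h}) ` hr.act v))"
  have GP: "G face_of P" unfolding G_def
  proof (rule face_of_Inter)
    fix T assume "T \<in> insert P ((\<lambda>h. P \<inter> {x. a h \<bullet> x = b h}) ` hr.act v)"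
    then show "T face_of P"
    proof
      assume "T = P" then show ?thesis using face_of_refl[OF P_convex] by simp
    next
      assume "T \<in> (\<lambda>h. P \<inter> {x. a h \<bullet> x = b h}) ` hr.act v"
      then obtain h where h: "h \<in> hr.act v" "T = P \<inter> {x. a h \<bullet> x = b h}" by blast
      have "h \<in> H" using h(1) by (simp add: hr.act_def)
      then show ?thesis unfolding h(2)
        by (intro face_of_Int_supporting_hyperplane_le[OF P_convex]) (simp add: hr.P_le)
    qed
  qed simp
  have vG: "v \<in> G" using vP by (auto simp: G_def hr.act_def)
  have "compact G" by (rule face_of_imp_compact[OF P_convex P_compact GP])
  moreover have "convex G" using GP by (rule face_of_imp_convex)
  moreover have "G \<noteq> {}" using vG by blast
  ultimately obtain u where uG: "u extreme_point_of G" using extreme_point_exists_convex by blast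
  have uP: "u extreme_point_of P" using uG extreme_point_of_face[OF GP] by blast
  have uG': "u \<in> G" using uG by (simp add: extreme_point_of_def)
  have uPP: "u \<in> P" using uP by (simp add: extreme_point_of_def)
  have act_sub: "hr.act v \<subseteq> hr.act u"
  proof
    fix h assume h: "h \<in> hr.act v"
    then have "u \<in> P \<inter> {x. a h \<bullet> x = b h}" using uG' unfolding G_def by blast
    then show "h \<in> hr.act u" using h by (simp add: hr.act_def)
  qed
  have "card (hr.N u) = DIM('a)"
  proof -
    have "card {F. F facet_of P \<and> u \<in> F} = DIM('a)" using sP uP by (simp add: simple_polytope_def)
    then show ?thesis using hr.card_facets_act[OF uPP] hr.card_N by simp
  qed
  moreover obtain eu where eu: "eu > 0" "P \<inter> ball u eu = {x. \<forall>m\<in>hr.N u. m \<bullet> x \<le> m \<bullet> u} \<inter> ball u eu"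
    using hr.local_N[OF uPP] by blast
  then have "span (hr.N u) = UNIV" using ext_span uP by blast
  moreover have "finite (hr.N u)" using hr.finH by (simp add: hr.N_def hr.act_def)
  ultimately have indNu: "independent (hr.N u)"
    using card_eq_dim[of "hr.N u" UNIV] by simp
  have "hr.N v \<subseteq> hr.N u" using act_sub unfolding hr.N_def by (rule image_mono)
  then have indN: "independent (hr.N v)" by (rule independent_mono[OF indNu])
  have indJ: "independent (uminus ` J)"
  proof -
    have "J \<subseteq> S" using KS by (auto simp: J_def)
    then have "independent J" by (rule independent_mono[OF indS])
    moreover have "inj_on uminus (span J)" by (simp add: inj_on_def)
    ultimately show ?thesis using linear_independent_injective_image[OF linear_uminus] by blast
  qed
  have orth: "\<forall>x\<in>hr.N v. \<forall>y\<in>uminus ` J. x \<bullet> y = 0"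
  proof (intro ballI)
    fix x y assume x: "x \<in> hr.N v" and y: "y \<in> uminus ` J"
    obtain h where h: "h \<in> hr.act v" "x = a h" using x by (auto simp: hr.N_def)
    obtain \<alpha> where \<alpha>: "\<alpha> \<in> J" "y = - \<alpha>" using y by blast
    have aS: "\<alpha> \<in> S" using \<alpha>(1) KS by (auto simp: J_def)
    have "a h \<bullet> \<alpha> = 0"
    proof (rule perp_lemma[OF aS vP])
      show "v \<bullet> \<alpha> = 0" using \<alpha>(1) by (simp add: J_def)
      show "\<forall>y\<in>P. a h \<bullet> y \<le> b h" using h(1) hr.P_le by (auto simp: hr.act_def)
      show "a h \<bullet> v = b h" using h(1) by (simp add: hr.act_def)
    qed
    then show "x \<bullet> y = 0" using h(2) \<alpha>(2) by simp
  qed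
  have indM: "independent M" unfolding M_def by (rule indep_union_orth[OF indN indJ orth])
  have cardM: "card M = DIM('a)"
  proof -
    have "dim M = card M" by (rule dim_eq_card_independent[OF indM])
    moreover have "dim M = DIM('a)" using spanM dim_eq_full by blast
    ultimately show ?thesis by simp
  qed
  have finM: "finite M" using indM by (rule finiteI_independent)
  have polyT: "polyhedron {x. \<forall>m\<in>M. m \<bullet> x \<le> m \<bullet> v}"
  proof -
    have "{x. \<forall>m\<in>M. m \<bullet> x \<le> m \<bullet> v} = \<Inter> ((\<lambda>m. {x. m \<bullet> x \<le> m \<bullet> v}) ` M)" by blast
    moreover have "polyhedron (\<Inter> ((\<lambda>m. {x. m \<bullet> x \<le> m \<bullet> v}) ` M))"
      using finM by (intro polyhedron_Inter) (auto simp: polyhedron_halfspace_le)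
    ultimately show ?thesis by simp
  qed
  have vQ': "v \<in> P \<inter> chamber K" using vP vK by blast
  have "card {F. F facet_of (P \<inter> chamber K) \<and> v \<in> F} = card {F. F facet_of {x. \<forall>m\<in>M. m \<bullet> x \<le> m \<bullet> v} \<and> v \<in> F}"
    by (rule local_facets_card[OF Q_polyhedron[OF KS] polyT vQ' e loc])
  also have "\<dots> = DIM('a)" by (rule simplicial_cone_facets[OF indM cardM])
  finally show "card {F. F facet_of (P \<inter> chamber K) \<and> v \<in> F} = DIM('a)" .
qed


lemma Q_facet_class:
  assumes KS: "K \<subseteq> S" and hr: "hrep P H a b" and G: "G facet_of (P \<inter> chamber K)"
  shows "(\<exists>h\<in>H. G = (P \<inter> chamber K) \<inter> {x. a h \<bullet> x = b h}) \<or>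
         (\<exists>\<alpha>\<in>K. G = (P \<inter> chamber K) \<inter> {x. x \<bullet> \<alpha> = 0})"
proof -
  interpret hr: hrep P H a b by (rule hr)
  define Q where "Q = P \<inter> chamber K"
  define wl where "wl \<alpha> = {x. (- \<alpha>) \<bullet> x \<le> 0}" for \<alpha> :: 'a
  define HQ where "HQ = H \<union> wl ` K"
  have finK: "finite K" using KS finS finite_subset by blast
  have finHQ: "finite HQ" using hr.finH finK by (simp add: HQ_def)
  have cK: "chamber K = \<Inter> (wl ` K)" by (auto simp: chamber_def wl_def inner_commute)
  have QHQ: "Q = \<Inter> HQ" unfolding Q_def HQ_def cK using hr.PH by auto
  define \<Phi> where "\<Phi> = {F'. F' \<subseteq> HQ \<and> Q = \<Inter> F'}"
  have "HQ \<in> \<Phi>" using QHQ by (simp add: \<Phi>_def)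
  then obtain \<M> where \<M>: "\<M> \<in> \<Phi>" "\<And>F'. F' \<in> \<Phi> \<Longrightarrow> card \<M> \<le> card F'"
    using ex_has_least_nat[of "\<lambda>F'. F' \<in> \<Phi>" HQ card] by blast
  have \<M>sub: "\<M> \<subseteq> HQ" and Q\<M>: "Q = \<Inter> \<M>" using \<M>(1) by (auto simp: \<Phi>_def)
  have fin\<M>: "finite \<M>" using finite_subset[OF \<M>sub finHQ] .
  have aU: "affine hull Q = UNIV" using Q_fulldim[OF KS] aff_dim_eq_full unfolding Q_def by blast
  define c where "c h = (if h \<in> H then a h else - (SOME \<alpha>. \<alpha> \<in> K \<and> h = wl \<alpha>))" for h
  define d where "d h = (if h \<in> H then b h else 0)" for h
  have faceq: "c h \<noteq> 0 \<and> h = {x. c h \<bullet> x \<le> d h}" if hM: "h \<in> \<M>" for h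
  proof (cases "h \<in> H")
    case True then show ?thesis using hr.faceq[OF True] by (simp add: c_def d_def)
  next
    case False
    then have "h \<in> wl ` K" using hM \<M>sub by (auto simp: HQ_def)
    then have ex: "\<exists>\<alpha>. \<alpha> \<in> K \<and> h = wl \<alpha>" by blast
    define \<alpha> where "\<alpha> = (SOME \<alpha>. \<alpha> \<in> K \<and> h = wl \<alpha>)"
    have \<alpha>: "\<alpha> \<in> K" "h = wl \<alpha>" using someI_ex[OF ex] by (simp_all add: \<alpha>_def)
    have an: "\<alpha> \<noteq> 0" using S_nz \<alpha>(1) KS by blast
    have ch: "c h = - \<alpha>" using False unfolding c_def \<alpha>_def by simp
    have dh: "d h = 0" using False unfolding d_def by simp
    show ?thesis unfolding ch dh using an \<alpha>(2) by (simp add: wl_def)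
  qed
  have seq: "Q = affine hull Q \<inter> \<Inter> \<M>" using Q\<M> aU by simp
  have psub: "Q \<subset> affine hull Q \<inter> \<Inter> F'" if sub: "F' \<subset> \<M>" for F'
  proof -
    have le: "Q \<subseteq> \<Inter> F'" using Q\<M> sub by blast
    have "Q \<noteq> \<Inter> F'"
    proof
      assume eq: "Q = \<Inter> F'"
      then have "F' \<in> \<Phi>" using sub \<M>sub by (auto simp: \<Phi>_def)
      then have "card \<M> \<le> card F'" by (rule \<M>(2))
      moreover have "card F' < card \<M>" by (rule psubset_card_mono[OF fin\<M> sub])
      ultimately show False by simp
    qed
    then show ?thesis using le aU by auto
  qed
  have GQ: "G facet_of Q" using G by (simp add: Q_def)
  obtain h where h: "h \<in> \<M>" "G = Q \<inter> {x. c h \<bullet> x = d h}"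
    using facet_of_polyhedron_explicit[OF fin\<M> seq faceq psub, of G] GQ by blast
  show ?thesis
  proof (cases "h \<in> H")
    case True
    then show ?thesis using h by (auto simp: c_def d_def Q_def)
  next
    case False
    then have "h \<in> wl ` K" using h(1) \<M>sub by (auto simp: HQ_def)
    then have ex: "\<exists>\<alpha>. \<alpha> \<in> K \<and> h = wl \<alpha>" by blast
    define \<alpha> where "\<alpha> = (SOME \<alpha>. \<alpha> \<in> K \<and> h = wl \<alpha>)"
    have \<alpha>: "\<alpha> \<in> K" "h = wl \<alpha>" using someI_ex[OF ex] by (simp_all add: \<alpha>_def)
    have ch: "c h = - \<alpha>" using False unfolding c_def \<alpha>_def by simp
    have dh: "d h = 0" using False unfolding d_def by simp
    have "G = Q \<inter> {x. x \<bullet> \<alpha> = 0}"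
      using h(2) unfolding ch dh by (auto simp: inner_commute)
    then show ?thesis using \<alpha>(1) by (auto simp: Q_def)
  qed
qed

lemma wall_facet_eq:
  assumes KS: "K \<subseteq> S" and G: "G facet_of (P \<inter> chamber K)" and aK: "\<alpha> \<in> K"
    and sub: "G \<subseteq> {x. x \<bullet> \<alpha> = 0}"
  shows "G = (P \<inter> chamber K) \<inter> {x. x \<bullet> \<alpha> = 0}"
proof -
  define Q where "Q = P \<inter> chamber K"
  have cQ: "convex Q" using Q_polytope[OF KS] polytope_imp_convex by (simp add: Q_def)
  have hyp: "{x. x \<bullet> \<alpha> = 0} = {x. (- \<alpha>) \<bullet> x = 0}" by (auto simp: inner_commute)
  have QA: "Q \<inter> {x. x \<bullet> \<alpha> = 0} face_of Q"
    unfolding hyp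
    by (rule face_of_Int_supporting_hyperplane_le[OF cQ]) (auto simp: Q_def chamber_def inner_commute aK)
  have GQ: "G facet_of Q" using G by (simp add: Q_def)
  have GsubQA: "G \<subseteq> Q \<inter> {x. x \<bullet> \<alpha> = 0}" using sub facet_of_imp_subset[OF GQ] by blast
  have GfQA: "G face_of (Q \<inter> {x. x \<bullet> \<alpha> = 0})"
    by (rule face_of_subset[OF facet_of_imp_face_of[OF GQ] GsubQA]) blast
  have an: "\<alpha> \<noteq> 0" using S_nz aK KS by blast
  have dQ: "aff_dim Q = DIM('a)" using Q_fulldim[OF KS] by (simp add: Q_def)
  have ne: "Q \<inter> {x. x \<bullet> \<alpha> = 0} \<noteq> Q"
  proof
    assume "Q \<inter> {x. x \<bullet> \<alpha> = 0} = Q"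
    then have "Q \<subseteq> {x. \<alpha> \<bullet> x = 0}" by (auto simp: inner_commute)
    then have "aff_dim Q \<le> aff_dim {x. \<alpha> \<bullet> x = 0}" by (rule aff_dim_subset)
    then show False using dQ aff_dim_hyperplane[OF an, of 0] by (simp add: of_nat_diff DIM_positive)
  qed
  have d1: "aff_dim (Q \<inter> {x. x \<bullet> \<alpha> = 0}) < aff_dim Q"
    by (rule face_of_aff_dim_lt[OF cQ QA ne])
  have dG: "aff_dim G = aff_dim Q - 1" using GQ by (simp add: facet_of_def)
  show ?thesis
  proof (rule ccontr)
    assume "G \<noteq> (P \<inter> chamber K) \<inter> {x. x \<bullet> \<alpha> = 0}"
    then have "G \<noteq> Q \<inter> {x. x \<bullet> \<alpha> = 0}" by (simp add: Q_def)
    moreover have "convex (Q \<inter> {x. x \<bullet> \<alpha> = 0})" using QA face_of_imp_convex by blast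
    ultimately have "aff_dim G < aff_dim (Q \<inter> {x. x \<bullet> \<alpha> = 0})"
      using face_of_aff_dim_lt GfQA by blast
    then show False using d1 dG by simp
  qed
qed


lemma refl_dot2: "n \<bullet> refl \<alpha> x = n \<bullet> x - (2 * (x \<bullet> \<alpha>) / (\<alpha> \<bullet> \<alpha>)) * (\<alpha> \<bullet> n)"
  using refl_dot[of \<alpha> x n] by (simp add: inner_commute)

lemma flag_fwd:
  assumes KS: "K \<subseteq> S" and fP: "flag_polytope P"
  shows "flag_polytope (P \<inter> chamber K)"
  unfolding flag_polytope_def
proof (intro conjI allI impI)
  show "polytope (P \<inter> chamber K)" by (rule Q_polytope[OF KS])
  fix \<F> assume A: "\<F> \<subseteq> {F. F facet_of (P \<inter> chamber K)} \<and> (\<forall>F\<in>\<F>. \<forall>G\<in>\<F>. F \<inter> G \<noteq> {})"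
  have Ff: "\<And>G. G \<in> \<F> \<Longrightarrow> G facet_of (P \<inter> chamber K)" using A by blast
  have pw: "\<And>F G. F \<in> \<F> \<Longrightarrow> G \<in> \<F> \<Longrightarrow> F \<inter> G \<noteq> {}" using A by blast
  obtain H a b where hr: "hrep P H a b" using hrep_exists[OF P_polytope full_dim] by blast
  interpret hr: hrep P H a b by (rule hr)
  define Q where "Q = P \<inter> chamber K"
  define Wf where "Wf = {G\<in>\<F>. \<exists>\<alpha>\<in>K. G \<subseteq> {x. x \<bullet> \<alpha> = 0}}"
  define Pf where "Pf = \<F> - Wf"
  have Pclass: "\<forall>G\<in>Pf. \<exists>h. h \<in> H \<and> G = Q \<inter> {x. a h \<bullet> x = b h}"
  proof
    fix G assume G: "G \<in> Pf"
    then have GF: "G \<in> \<F>" and nW: "\<not> (\<exists>\<alpha>\<in>K. G \<subseteq> {x. x \<bullet> \<alpha> = 0})"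
      by (auto simp: Pf_def Wf_def)
    show "\<exists>h. h \<in> H \<and> G = Q \<inter> {x. a h \<bullet> x = b h}"
      using Q_facet_class[OF KS hr Ff[OF GF]]
    proof
      assume "\<exists>h\<in>H. G = (P \<inter> chamber K) \<inter> {x. a h \<bullet> x = b h}"
      then show ?thesis by (auto simp: Q_def)
    next
      assume "\<exists>\<alpha>\<in>K. G = (P \<inter> chamber K) \<inter> {x. x \<bullet> \<alpha> = 0}"
      then obtain \<alpha> where "\<alpha> \<in> K" "G \<subseteq> {x. x \<bullet> \<alpha> = 0}" by blast
      then show ?thesis using nW by blast
    qed
  qed
  obtain hf where hf: "\<And>G. G \<in> Pf \<Longrightarrow> hf G \<in> H \<and> G = Q \<inter> {x. a (hf G) \<bullet> x = b (hf G)}"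
    using bchoice[OF Pclass] by blast
  define FP where "FP G = P \<inter> {x. a (hf G) \<bullet> x = b (hf G)}" for G
  have FPf: "FP G facet_of P" if "G \<in> Pf" for G
    unfolding FP_def hr.facet_iff using hf[OF that] by blast
  have GFP: "G \<subseteq> FP G" if "G \<in> Pf" for G
    using hf[OF that] by (auto simp: FP_def Q_def)
  have nle: "a (hf G) \<bullet> x \<le> b (hf G)" if "G \<in> Pf" "x \<in> P" for G x
    using hr.P_le hf[OF that(1)] that(2) by blast
  define J where "J = {\<alpha>\<in>K. \<exists>G\<in>Wf. G \<subseteq> {x. x \<bullet> \<alpha> = 0}}"
  have KS': "\<And>\<alpha>. \<alpha> \<in> K \<Longrightarrow> \<alpha> \<in> S" using KS by blast
  have C1: "a (hf G) \<bullet> \<alpha> \<ge> 0" if G: "G \<in> Pf" and aK: "\<alpha> \<in> K" for G \<alpha>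
  proof (rule ccontr)
    assume neg: "\<not> a (hf G) \<bullet> \<alpha> \<ge> 0"
    have "\<not> G \<subseteq> {x. x \<bullet> \<alpha> = 0}" using G aK by (auto simp: Pf_def Wf_def)
    then obtain x where xG: "x \<in> G" "x \<bullet> \<alpha> \<noteq> 0" by blast
    have xQ: "x \<in> Q" and xn: "a (hf G) \<bullet> x = b (hf G)" using hf[OF G] xG(1) by auto
    have "x \<bullet> \<alpha> \<ge> 0" using xQ aK by (simp add: Q_def chamber_def)
    then have xa: "x \<bullet> \<alpha> > 0" using xG(2) by simp
    have "refl \<alpha> x \<in> P" using P_refl[OF KS'[OF aK]] xQ by (simp add: Q_def)
    then have "a (hf G) \<bullet> refl \<alpha> x \<le> b (hf G)" by (rule nle[OF G])
    moreover have "a (hf G) \<bullet> refl \<alpha> x = b (hf G) - (2 * (x \<bullet> \<alpha>) / (\<alpha> \<bullet> \<alpha>)) * (\<alpha> \<bullet> a (hf G))"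
      using refl_dot2[of "a (hf G)" \<alpha> x] xn by simp
    moreover have "(2 * (x \<bullet> \<alpha>) / (\<alpha> \<bullet> \<alpha>)) * (\<alpha> \<bullet> a (hf G)) < 0"
    proof -
      have "2 * (x \<bullet> \<alpha>) / (\<alpha> \<bullet> \<alpha>) > 0" using xa S_pos[OF KS'[OF aK]] by simp
      moreover have "\<alpha> \<bullet> a (hf G) < 0" using neg by (simp add: inner_commute)
      ultimately show ?thesis by (rule mult_pos_neg)
    qed
    ultimately show False by simp
  qed
  have C2: "a (hf G) \<bullet> \<alpha> = 0" if G: "G \<in> Pf" and aJ: "\<alpha> \<in> J" for G \<alpha>
  proof -
    obtain G' where G': "G' \<in> Wf" "G' \<subseteq> {x. x \<bullet> \<alpha> = 0}" and aK: "\<alpha> \<in> K" using aJ by (auto simp: J_def)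
    have "G \<in> \<F>" "G' \<in> \<F>" using G G'(1) by (auto simp: Pf_def Wf_def)
    then obtain z where z: "z \<in> G" "z \<in> G'" using pw by blast
    have zP: "z \<in> P" and zn: "a (hf G) \<bullet> z = b (hf G)" using hf[OF G] z(1) by (auto simp: Q_def)
    have za: "z \<bullet> \<alpha> = 0" using z(2) G'(2) by blast
    show ?thesis
    proof (rule perp_lemma[OF KS'[OF aK] zP za])
      show "\<forall>y\<in>P. a (hf G) \<bullet> y \<le> b (hf G)" using nle[OF G] by blast
      show "a (hf G) \<bullet> z = b (hf G)" by (rule zn)
    qed
  qed
  have "FP ` Pf \<subseteq> {F. F facet_of P}" using FPf by blast
  moreover have "\<forall>F\<in>FP ` Pf. \<forall>G\<in>FP ` Pf. F \<inter> G \<noteq> {}"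
  proof (intro ballI)
    fix F G assume "F \<in> FP ` Pf" "G \<in> FP ` Pf"
    then obtain G1 G2 where g: "G1 \<in> Pf" "G2 \<in> Pf" "F = FP G1" "G = FP G2" by blast
    have "G1 \<inter> G2 \<noteq> {}" using pw g(1,2) by (auto simp: Pf_def)
    then show "F \<inter> G \<noteq> {}" using GFP[OF g(1)] GFP[OF g(2)] g(3,4) by blast
  qed
  ultimately have interne: "\<Inter> (FP ` Pf) \<noteq> {}" using fP unfolding flag_polytope_def by blast
  define E where "E = P \<inter> \<Inter> (FP ` Pf)"
  have E_iff: "x \<in> E \<longleftrightarrow> x \<in> P \<and> (\<forall>G\<in>Pf. a (hf G) \<bullet> x = b (hf G))" for x
    by (auto simp: E_def FP_def)
  have Ene: "E \<noteq> {}"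
  proof (cases "Pf = {}")
    case True then show ?thesis using P_ne by (simp add: E_def)
  next
    case False
    then obtain G0 where "G0 \<in> Pf" by blast
    then have "\<Inter> (FP ` Pf) \<subseteq> P" by (auto simp: FP_def)
    then show ?thesis using interne by (simp add: E_def Int_absorb1)
  qed
  have clFP: "closed (\<Inter> (FP ` Pf))"
    by (intro closed_INT ballI) (simp add: FP_def closed_Int polytope_imp_closed[OF P_polytope] closed_hyperplane)
  have Ecomp: "compact E" unfolding E_def by (rule compact_Int_closed[OF P_compact clFP])
  have Econv: "convex E" unfolding E_def
    by (intro convex_Int P_convex convex_INT ballI) (simp add: FP_def convex_Int P_convex convex_hyperplane)
  obtain \<rho> where rho: "\<forall>a\<in>S. \<rho> \<bullet> a = 1" using rho_exists by blast
  have cont: "continuous_on X (\<lambda>x. \<rho> \<bullet> x)" for X by (intro continuous_intros)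
  obtain y1 where y1: "y1 \<in> E" "\<forall>z\<in>E. \<rho> \<bullet> z \<le> \<rho> \<bullet> y1"
    using continuous_attains_sup[OF Ecomp Ene cont] by blast
  have y1K: "y1 \<in> chamber K"
  proof -
    have "y1 \<bullet> \<alpha> \<ge> 0" if aK: "\<alpha> \<in> K" for \<alpha>
    proof (rule ccontr)
      assume "\<not> y1 \<bullet> \<alpha> \<ge> 0"
      then have ya: "y1 \<bullet> \<alpha> < 0" by simp
      have aS: "\<alpha> \<in> S" by (rule KS'[OF aK])
      have y1P: "y1 \<in> P" using y1(1) E_iff by blast
      have zP: "refl \<alpha> y1 \<in> P" by (rule P_refl[OF aS y1P])
      define c where "c = - (2 * (y1 \<bullet> \<alpha>) / (\<alpha> \<bullet> \<alpha>))"
      have cpos: "c > 0" using ya S_pos[OF aS] by (simp add: c_def divide_neg_pos)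
      have rd: "n \<bullet> refl \<alpha> y1 = n \<bullet> y1 + c * (\<alpha> \<bullet> n)" for n
        using refl_dot2[of n \<alpha> y1] by (simp add: c_def)
      have "a (hf G) \<bullet> refl \<alpha> y1 = b (hf G)" if G: "G \<in> Pf" for G
      proof -
        have "\<alpha> \<bullet> a (hf G) \<ge> 0" using C1[OF G aK] by (simp add: inner_commute)
        then have "c * (\<alpha> \<bullet> a (hf G)) \<ge> 0" using cpos by simp
        moreover have "a (hf G) \<bullet> y1 = b (hf G)" using y1(1) E_iff G by blast
        ultimately have "a (hf G) \<bullet> refl \<alpha> y1 \<ge> b (hf G)" using rd[of "a (hf G)"] by simp
        moreover have "a (hf G) \<bullet> refl \<alpha> y1 \<le> b (hf G)" by (rule nle[OF G zP])
        ultimately show ?thesis by simp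
      qed
      then have zE: "refl \<alpha> y1 \<in> E" using zP E_iff by blast
      have "\<alpha> \<bullet> \<rho> = 1" using rho aS by (simp add: inner_commute)
      then have "\<rho> \<bullet> refl \<alpha> y1 = \<rho> \<bullet> y1 + c"
        using rd[of \<rho>] by simp
      then have "\<rho> \<bullet> refl \<alpha> y1 > \<rho> \<bullet> y1" using cpos by simp
      then show False using y1(2) zE by force
    qed
    then show ?thesis by (simp add: chamber_def)
  qed
  define E' where "E' = E \<inter> chamber K"
  have E'comp: "compact E'" unfolding E'_def by (rule compact_Int_closed[OF Ecomp chamber_closed])
  have E'ne: "E' \<noteq> {}" using y1(1) y1K by (auto simp: E'_def)
  obtain y where y: "y \<in> E'" "\<forall>z\<in>E'. \<rho> \<bullet> y \<le> \<rho> \<bullet> z"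
    using continuous_attains_inf[OF E'comp E'ne cont] by blast
  have yE: "y \<in> E" and yK: "y \<in> chamber K" using y(1) by (auto simp: E'_def)
  have yP: "y \<in> P" using yE E_iff by blast
  have yJ: "y \<bullet> \<alpha> = 0" if aJ: "\<alpha> \<in> J" for \<alpha>
  proof (rule ccontr)
    assume ne: "y \<bullet> \<alpha> \<noteq> 0"
    have aK: "\<alpha> \<in> K" using aJ by (simp add: J_def)
    have aS: "\<alpha> \<in> S" by (rule KS'[OF aK])
    have "y \<bullet> \<alpha> \<ge> 0" using yK aK by (simp add: chamber_def)
    then have ya: "y \<bullet> \<alpha> > 0" using ne by simp
    define t where "t = (y \<bullet> \<alpha>) / (\<alpha> \<bullet> \<alpha>)"
    have tpos: "t > 0" using ya S_pos[OF aS] by (simp add: t_def)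
    define z where "z = refl \<alpha> y"
    have zP: "z \<in> P" unfolding z_def by (rule P_refl[OF aS yP])
    have "a (hf G) \<bullet> z = b (hf G)" if G: "G \<in> Pf" for G
    proof -
      have "a (hf G) \<bullet> z = a (hf G) \<bullet> y - (2 * (y \<bullet> \<alpha>) / (\<alpha> \<bullet> \<alpha>)) * (\<alpha> \<bullet> a (hf G))"
        unfolding z_def by (rule refl_dot2)
      moreover have "\<alpha> \<bullet> a (hf G) = 0" using C2[OF G aJ] by (simp add: inner_commute)
      moreover have "a (hf G) \<bullet> y = b (hf G)" using yE E_iff G by blast
      ultimately show ?thesis by simp
    qed
    then have zE: "z \<in> E" using zP E_iff by blast
    define m where "m = (1/2) *\<^sub>R y + (1/2) *\<^sub>R z"
    have mE: "m \<in> E" using Econv yE zE unfolding m_def convex_def by simp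
    have hh: "(1/2) *\<^sub>R y + (1/2) *\<^sub>R y = y" by (simp flip: scaleR_add_left)
    have m_eq: "m = y - t *\<^sub>R \<alpha>"
      unfolding m_def z_def refl_def t_def using hh by (simp add: algebra_simps)
    have mK: "m \<in> chamber K"
    proof -
      have "m \<bullet> \<beta> \<ge> 0" if bK: "\<beta> \<in> K" for \<beta>
      proof (cases "\<beta> = \<alpha>")
        case True
        have "m \<bullet> \<alpha> = y \<bullet> \<alpha> - t * (\<alpha> \<bullet> \<alpha>)" by (simp add: m_eq inner_diff_left)
        also have "\<dots> = 0" using S_pos[OF aS] by (simp add: t_def)
        finally show ?thesis using True by simp
      next
        case False
        have "\<alpha> \<bullet> \<beta> \<le> 0" by (rule simple_obtuse[OF aS KS'[OF bK]]) (use False in auto)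
        then have "t * (\<alpha> \<bullet> \<beta>) \<le> 0" using tpos by (simp add: mult_pos_neg mult_le_0_iff)
        moreover have "m \<bullet> \<beta> = y \<bullet> \<beta> - t * (\<alpha> \<bullet> \<beta>)" by (simp add: m_eq inner_diff_left)
        moreover have "y \<bullet> \<beta> \<ge> 0" using yK bK by (simp add: chamber_def)
        ultimately show ?thesis by simp
      qed
      then show ?thesis by (simp add: chamber_def)
    qed
    have "\<rho> \<bullet> m = \<rho> \<bullet> y - t" using rho aS by (simp add: m_eq inner_diff_right)
    then have "\<rho> \<bullet> m < \<rho> \<bullet> y" using tpos by simp
    moreover have "m \<in> E'" using mE mK by (simp add: E'_def)
    ultimately show False using y(2) by force
  qed
  have yQ: "y \<in> Q" using yP yK by (simp add: Q_def)
  have "y \<in> \<Inter> \<F>"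
  proof
    fix G assume GF: "G \<in> \<F>"
    show "y \<in> G"
    proof (cases "G \<in> Wf")
      case True
      then obtain \<alpha> where aK: "\<alpha> \<in> K" and sub: "G \<subseteq> {x. x \<bullet> \<alpha> = 0}" by (auto simp: Wf_def)
      have "\<alpha> \<in> J" using True aK sub by (auto simp: J_def)
      then have "y \<bullet> \<alpha> = 0" by (rule yJ)
      moreover have "G = Q \<inter> {x. x \<bullet> \<alpha> = 0}"
        using wall_facet_eq[OF KS Ff[OF GF] aK sub] by (simp add: Q_def)
      ultimately show ?thesis using yQ by blast
    next
      case False
      then have G: "G \<in> Pf" using GF by (simp add: Pf_def)
      have "a (hf G) \<bullet> y = b (hf G)" using yE E_iff G by blast
      then show ?thesis using hf[OF G] yQ by blast
    qed
  qed
  then show "\<Inter> \<F> \<noteq> {}" by blast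
qed

end

theorem proposition2p6:
  fixes R S K \<Lambda> :: "'a::euclidean_space set"
  assumes "root_system R"
    and "simple_system R S"
    and "finite \<Lambda>" and "\<Lambda> \<subseteq> chamber S"
    and "K \<subseteq> S"
    and full_dim: "aff_dim (W_polytope S \<Lambda>) = int DIM('a)"
    and nondeg: "\<forall>v. v extreme_point_of (W_polytope S \<Lambda>) \<longrightarrow> v \<notin> frontier (chamber S)"
  shows "(simple_polytope (W_polytope S \<Lambda>) \<longleftrightarrow>
            simple_polytope (W_polytope S \<Lambda> \<inter> chamber K))
       \<and> (flag_polytope (W_polytope S \<Lambda>) \<longrightarrow>
            flag_polytope (W_polytope S \<Lambda> \<inter> chamber K))"
proof -
  interpret weyl R S \<Lambda>
    using assms(1,2,3,4) full_dim nondeg by unfold_locales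
  show ?thesis
    using simple_fwd[OF assms(5)] simple_back[OF assms(5)] flag_fwd[OF assms(5)] by blast
qed

end
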